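(* Let $\Omega:=\mathbb{D}\setminus[0,1)$, where $\mathbb{D}$ is the open unit disc in $\mathbb{C}$, let $\psi:\mathbb{D}\to\Omega$ be a Riemann map and $o=\psi(0)$. Then for every $x\in(0,1]$ there is $R_0>0$ such that $H^s_o(x,R)=\emptyset$ for all $0<R<R_0$. Moreover, $\overline{H^b_o(x,R)}\cap\partial\Omega=\{x\}$ for every $x\in\partial\Omega$ and $R>0$.
   Context: For a Kobayashi hyperbolic domain $\Omega\subset\mathbb{C}$ with Kobayashi distance $\mathsf{k}_\Omega$, $x\in\partial\Omega$, $o\in\Omega$, $R>0$: $H^s_o(x,R)=\{z\in\Omega:\limsup_{w\to x}(\mathsf{k}_\Omega(z,w)-\mathsf{k}_\Omega(o,w))<\tfrac12\log R\}$ and $H^b_o(x,R)=\{z\in\Omega:\liminf_{w\to x}(\mathsf{k}_\Omega(z,w)-\mathsf{k}_\Omega(o,w))<\tfrac12\log R\}$; closures in $\mathbb{C}$. *)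

theory Defs
  imports "HOL-Complex_Analysis.Complex_Analysis"
begin

definition disc_dist0 :: "complex \<Rightarrow> real" where
  "disc_dist0 t = (1/2) * ln ((1 + norm t) / (1 - norm t))"

definition lempert :: "complex set \<Rightarrow> complex \<Rightarrow> complex \<Rightarrow> real" where
  "lempert \<Omega> z w = Inf {disc_dist0 t | t f. t \<in> ball 0 1 \<and> f holomorphic_on ball 0 1 \<and>
       f ` ball 0 1 \<subseteq> \<Omega> \<and> f 0 = z \<and> f t = w}"

definition kobayashi :: "complex set \<Rightarrow> complex \<Rightarrow> complex \<Rightarrow> real" where
  "kobayashi \<Omega> z w = Inf {(\<Sum>i<n. lempert \<Omega> (p i) (p (Suc i))) | n p.
       p 0 = z \<and> p n = w \<and> (\<forall>i\<le>n. p i \<in> \<Omega>)}"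

definition horoball_s :: "complex set \<Rightarrow> complex \<Rightarrow> complex \<Rightarrow> real \<Rightarrow> complex set" where
  "horoball_s \<Omega> o' x R = {z \<in> \<Omega>.
     Limsup (at x within \<Omega>) (\<lambda>w. ereal (kobayashi \<Omega> z w - kobayashi \<Omega> o' w))
       < ereal (ln R / 2)}"

definition horoball_b :: "complex set \<Rightarrow> complex \<Rightarrow> complex \<Rightarrow> real \<Rightarrow> complex set" where
  "horoball_b \<Omega> o' x R = {z \<in> \<Omega>.
     Liminf (at x within \<Omega>) (\<lambda>w. ereal (kobayashi \<Omega> z w - kobayashi \<Omega> o' w))
       < ereal (ln R / 2)}"

end

theory Submission
  imports Defs
begin

definition ath :: "real \<Rightarrow> real" where "ath x = (1/2) * ln ((1+x)/(1-x))"

definition pd :: "complex \<Rightarrow> complex \<Rightarrow> real" where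
  "pd a b = cmod ((a - b) / (1 - cnj a * b))"

definition rho :: "complex \<Rightarrow> complex \<Rightarrow> real" where
  "rho a b = disc_dist0 ((a - b) / (1 - cnj a * b))"

lemma rho_at: "rho a b = ath (pd a b)"
  by (simp add: rho_def pd_def disc_dist0_def ath_def)

lemma disc_dist0_at: "disc_dist0 t = ath (cmod t)"
  by (simp add: disc_dist0_def ath_def)

lemma denom_nz: assumes "cmod a < 1" "cmod b \<le> 1" shows "1 - cnj a * b \<noteq> 0"
proof
  assume "1 - cnj a * b = 0"
  then have "cmod (cnj a * b) = 1" by (metis eq_iff_diff_eq_0 norm_one)
  moreover have "cmod (cnj a * b) < 1" using assms
  proof -
    have "cmod a * cmod b \<le> cmod a" using assms by (simp add: mult_left_le)
    then show ?thesis using assms by (simp add: norm_mult)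
  qed
  ultimately show False by simp
qed

lemma key_identity:
  assumes "1 - cnj a * b \<noteq> 0"
  shows "1 - (cmod ((a - b) / (1 - cnj a * b)))^2 =
     (1 - (cmod a)^2) * (1 - (cmod b)^2) / (cmod (1 - cnj a * b))^2"
proof -
  have nz: "(cmod (1 - cnj a * b))^2 \<noteq> 0" using assms by simp
  have "(cmod (1 - cnj a * b))^2 - (cmod (a - b))^2 = (1 - (cmod a)^2) * (1 - (cmod b)^2)"
    unfolding cmod_power2 by (cases a; cases b) (simp add: power2_eq_square algebra_simps)
  then show ?thesis using nz
    by (simp add: norm_divide power_divide field_simps)
qed

lemma pd_bounds: assumes "cmod a < 1" "cmod b < 1" shows "0 \<le> pd a b" "pd a b < 1"
proof -
  have nz: "1 - cnj a * b \<noteq> 0" using denom_nz assms by simp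
  have "(1 - (cmod a)^2) * (1 - (cmod b)^2) / (cmod (1 - cnj a * b))^2 > 0"
    using assms nz by (intro divide_pos_pos mult_pos_pos) (auto simp: abs_square_less_1)
  then have "(pd a b)^2 < 1" using key_identity[OF nz] unfolding pd_def by linarith
  then show "pd a b < 1" by (simp add: abs_square_less_1 pd_def)
  show "0 \<le> pd a b" by (simp add: pd_def)
qed

lemma pd_sym: "pd a b = pd b a"
proof -
  have "cmod (1 - cnj a * b) = cmod (1 - cnj b * a)"
    by (metis complex_cnj_cnj complex_cnj_diff complex_cnj_mult complex_cnj_one complex_mod_cnj mult.commute)
  moreover have "cmod (a - b) = cmod (b - a)" by (simp add: norm_minus_commute)
  ultimately show ?thesis by (simp add: pd_def norm_divide)
qed

definition M :: "complex \<Rightarrow> complex \<Rightarrow> complex" where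
  "M c z = (z - c) / (1 - cnj c * z)"

lemma M_norm: assumes "cmod c < 1" "cmod z < 1" shows "cmod (M c z) < 1"
  using Moebius_function_norm_lt_1[OF assms, of 0] by (simp add: M_def Moebius_function_simple)

lemma M_invariance:
  assumes c: "cmod c < 1" and a: "cmod a < 1" and b: "cmod b < 1"
  shows "pd (M c a) (M c b) = pd a b"
proof -
  have D1: "1 - cnj c * a \<noteq> 0" and D2: "1 - cnj c * b \<noteq> 0" and D3: "1 - cnj a * b \<noteq> 0"
    using denom_nz c a b by auto
  have D1': "1 - c * cnj a \<noteq> 0" using D1
    by (metis complex_cnj_cnj complex_cnj_diff complex_cnj_mult complex_cnj_one complex_cnj_zero_iff)
  have cc: "c * cnj c \<noteq> 1"
  proof
    assume "c * cnj c = 1"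
    then have "cmod (c * cnj c) = 1" by simp
    then have "cmod c * cmod c = 1" by (simp add: norm_mult)
    with c show False by (metis less_irrefl mult_le_one norm_ge_zero less_imp_le not_less mult_strict_mono norm_not_less_zero mult_less_cancel_right1)
  qed
  have D4: "1 - cnj (M c a) * M c b \<noteq> 0" using denom_nz[of "M c a" "M c b"] M_norm[OF c a] M_norm[OF c b] by simp
  have eq: "(M c a - M c b) / (1 - cnj (M c a) * M c b) = ((a - b) / (1 - cnj a * b)) * ((1 - c * cnj a) / (1 - cnj c * a))"
  proof -
    have e1: "M c a - M c b = (a - b) * (1 - c * cnj c) / ((1 - cnj c * a) * (1 - cnj c * b))"
      using D1 D2 unfolding M_def by (simp add: field_simps)
    have e2: "1 - cnj (M c a) * M c b = (1 - c * cnj c) * (1 - cnj a * b) / ((1 - c * cnj a) * (1 - cnj c * b))"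
    proof -
      have g: "\<And>X Y Z W::complex. Y \<noteq> 0 \<Longrightarrow> W \<noteq> 0 \<Longrightarrow> 1 - X/Y * (Z/W) = (Y*W - X*Z)/(Y*W)"
        by (simp add: field_simps)
      have "cnj (M c a) = (cnj a - cnj c)/(1 - c*cnj a)" by (simp add: M_def)
      then have "1 - cnj (M c a) * M c b = ((1 - c*cnj a)*(1 - cnj c*b) - (cnj a - cnj c)*(b - c)) / ((1 - c*cnj a)*(1 - cnj c*b))"
        using g[OF D1' D2] by (simp add: M_def)
      also have "(1 - c*cnj a)*(1 - cnj c*b) - (cnj a - cnj c)*(b - c) = (1 - c * cnj c) * (1 - cnj a * b)"
        by (simp add: algebra_simps)
      finally show ?thesis .
    qed
    have cc': "1 - c * cnj c \<noteq> 0" using cc by simp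
    have g2: "\<And>P Q X Y Z Xc::complex. Q\<noteq>0 \<Longrightarrow> X\<noteq>0 \<Longrightarrow> Y\<noteq>0 \<Longrightarrow> Z\<noteq>0 \<Longrightarrow> Xc\<noteq>0 \<Longrightarrow>
       (P*Q/(X*Y)) / (Q*Z/(Xc*Y)) = (P/Z)*(Xc/X)" by (simp add: field_simps)
    show ?thesis unfolding e1 e2 using g2[OF cc' D1 D2 D3 D1'] by simp
  qed
  have "cmod ((1 - c * cnj a) / (1 - cnj c * a)) = 1"
  proof -
    have "cmod (1 - c * cnj a) = cmod (1 - cnj c * a)"
      by (metis complex_cnj_cnj complex_cnj_diff complex_cnj_mult complex_cnj_one complex_mod_cnj)
    then show ?thesis using D1 by (simp add: norm_divide)
  qed
  then show ?thesis unfolding pd_def eq norm_mult by simp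
qed

lemma pd_zero_bound:
  assumes u: "cmod u < 1" and v: "cmod v < 1"
  shows "pd u v \<le> (cmod u + cmod v) / (1 + cmod u * cmod v)"
proof -
  define s where "s = cmod u"
  define t where "t = cmod v"
  have s: "0 \<le> s" "s < 1" and t: "0 \<le> t" "t < 1" using u v by (auto simp: s_def t_def)
  have nz: "1 - cnj u * v \<noteq> 0" using denom_nz u v by simp
  have n1: "cmod (1 - cnj u * v) \<le> 1 + s * t"
    using norm_triangle_ineq4[of 1 "cnj u * v"] by (simp add: norm_mult s_def t_def)
  have n0: "0 < cmod (1 - cnj u * v)" using nz by simp
  have A: "(1 - s^2) * (1 - t^2) / (1 + s*t)^2 \<le> (1 - s^2) * (1 - t^2) / (cmod (1 - cnj u * v))^2"
    using s t n1 n0 by (intro divide_left_mono mult_nonneg_nonneg mult_pos_pos power_mono) (auto simp: abs_square_le_1 power_le_one)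
  have B: "(1 - s^2) * (1 - t^2) / (1 + s*t)^2 = 1 - ((s+t)/(1+s*t))^2"
  proof -
    have Y: "(1+s*t) \<noteq> 0" using s t by (smt (verit) mult_nonneg_nonneg)
    have "1 - ((s+t)/(1+s*t))^2 = ((1+s*t)^2 - (s+t)^2)/(1+s*t)^2"
      using Y by (simp add: diff_divide_distrib power_divide)
    also have "(1+s*t)^2 - (s+t)^2 = (1 - s^2) * (1 - t^2)" by (simp add: power2_eq_square algebra_simps)
    finally show ?thesis by simp
  qed
  have "(pd u v)^2 \<le> ((s+t)/(1+s*t))^2"
    using key_identity[OF nz] A B unfolding pd_def s_def t_def by linarith
  then show ?thesis using s t by (simp add: s_def t_def pd_def power2_le_iff_abs_le)
qed

lemma pd_triangle:
  assumes a: "cmod a < 1" and b: "cmod b < 1" and c: "cmod c < 1"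
  shows "pd a c \<le> (pd a b + pd b c) / (1 + pd a b * pd b c)"
proof -
  have "pd a c = pd (M b a) (M b c)" using M_invariance[OF b a c] by simp
  also have "\<dots> \<le> (cmod (M b a) + cmod (M b c)) / (1 + cmod (M b a) * cmod (M b c))"
    using pd_zero_bound M_norm a b c by simp
  also have "cmod (M b a) = pd a b" using pd_sym[of a b]
    by (simp add: M_def pd_def norm_divide norm_minus_commute) metis
  also have "cmod (M b c) = pd b c"
    by (simp add: M_def pd_def norm_divide norm_minus_commute)
  finally show ?thesis .
qed

lemma ath_mono: assumes "0 \<le> x" "x \<le> y" "y < 1" shows "ath x \<le> ath y"
proof -
  have "(1+x)/(1-x) \<le> (1+y)/(1-y)" using assms by (simp add: field_simps)
  moreover have "0 < (1+x)/(1-x)" using assms by simp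
  ultimately show ?thesis unfolding ath_def by simp
qed

lemma ath_add: assumes "0 \<le> y" "y < 1" "0 \<le> z" "z < 1"
  shows "ath ((y+z)/(1+y*z)) = ath y + ath z"
proof -
  have yz: "0 \<le> y*z" using assms by simp
  have e: "(1 + (y+z)/(1+y*z)) / (1 - (y+z)/(1+y*z)) = ((1+y)/(1-y)) * ((1+z)/(1-z))"
  proof -
    have d: "1 + y*z - (y+z) = (1-y)*(1-z)" by (simp add: algebra_simps)
    have "(1 + (y+z)/(1+y*z)) = (1+y)*(1+z)/(1+y*z)" using yz by (simp add: field_simps)
    moreover have "(1 - (y+z)/(1+y*z)) = (1-y)*(1-z)/(1+y*z)" using yz d by (simp add: field_simps)
    moreover have g: "\<And>A B D P Q::real. D\<noteq>0 \<Longrightarrow> P\<noteq>0 \<Longrightarrow> Q\<noteq>0 \<Longrightarrow> (A*B/D)/(P*Q/D) = (A/P)*(B/Q)"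
      by (simp add: field_simps)
    moreover have nz: "1+y*z \<noteq> 0" "1-y \<noteq> 0" "1 - z \<noteq> 0" using yz assms by (auto simp del: mult_nonneg_nonneg)
    ultimately show ?thesis using g[OF nz, of "1+y" "1+z"] by simp
  qed
  have pos: "0 < (1+y)/(1-y)" "0 < (1+z)/(1-z)" using assms by auto
  have lm: "ln (((1+y)/(1-y)) * ((1+z)/(1-z))) = ln ((1+y)/(1-y)) + ln ((1+z)/(1-z))"
    using pos assms by (simp only: ln_mult) simp
  show ?thesis unfolding ath_def e lm by (simp add: algebra_simps)
qed

lemma frac_lt1: fixes y z :: real assumes "0 \<le> y" "y < 1" "0 \<le> z" "z < 1" shows "(y+z)/(1+y*z) < 1" "0 \<le> (y+z)/(1+y*z)"
proof -
  have "0 < (1-y)*(1-z)" using assms by simp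
  then show "(y+z)/(1+y*z) < 1" using assms by (simp add: field_simps algebra_simps)
  show "0 \<le> (y+z)/(1+y*z)" using assms by simp
qed

lemma rho_triangle:
  assumes a: "cmod a < 1" and b: "cmod b < 1" and c: "cmod c < 1"
  shows "rho a c \<le> rho a b + rho b c"
proof -
  note p1 = pd_bounds[OF a b] and p2 = pd_bounds[OF b c] and p3 = pd_bounds[OF a c]
  have "rho a c \<le> ath ((pd a b + pd b c) / (1 + pd a b * pd b c))"
    unfolding rho_at using pd_triangle[OF a b c] p1 p2 p3 frac_lt1[of "pd a b" "pd b c"]
    by (intro ath_mono) auto
  also have "\<dots> = rho a b + rho b c" unfolding rho_at using p1 p2 by (rule ath_add)
  finally show ?thesis .
qed

lemma rho_self: "rho a a = 0" by (simp add: rho_at pd_def ath_def)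

lemma ath_nonneg: "0 \<le> x \<Longrightarrow> x < 1 \<Longrightarrow> 0 \<le> ath x"
  using ath_mono[of 0 x] by (simp add: ath_def)

lemma rho_nonneg: "cmod a < 1 \<Longrightarrow> cmod b < 1 \<Longrightarrow> 0 \<le> rho a b"
  using pd_bounds ath_nonneg by (simp add: rho_at)

lemma M_eq_Moebius: "M a = Moebius_function 0 a"
  by (rule ext) (simp add: M_def Moebius_function_simple)

lemma M_holo: "cmod a < 1 \<Longrightarrow> M a holomorphic_on ball 0 1"
  unfolding M_eq_Moebius by (rule Moebius_function_holomorphic)

lemma M_inv: "cmod a < 1 \<Longrightarrow> cmod z < 1 \<Longrightarrow> M (-a) (M a z) = z"
  unfolding M_eq_Moebius by (rule Moebius_function_compose) auto

lemma M_self: "M a a = 0" by (simp add: M_def)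
lemma M_zero: "M (-a) 0 = a" by (simp add: M_def)

locale rmap =
  fixes \<Omega> :: "complex set" and \<psi> g :: "complex \<Rightarrow> complex"
  assumes psi_holo: "\<psi> holomorphic_on ball 0 1"
    and psi_in: "\<And>a. a \<in> ball 0 1 \<Longrightarrow> \<psi> a \<in> \<Omega>"
    and g_holo: "g holomorphic_on \<Omega>"
    and g_in: "\<And>w. w \<in> \<Omega> \<Longrightarrow> g w \<in> ball 0 1"
    and g_psi: "\<And>a. a \<in> ball 0 1 \<Longrightarrow> g (\<psi> a) = a"
    and psi_g: "\<And>w. w \<in> \<Omega> \<Longrightarrow> \<psi> (g w) = w"
begin

lemma lempert_eq:
  assumes z: "z \<in> \<Omega>" and w: "w \<in> \<Omega>"
  shows "lempert \<Omega> z w = rho (g z) (g w)"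
proof -
  define a where "a = g z"
  define b where "b = g w"
  have a: "cmod a < 1" and b: "cmod b < 1" using g_in z w by (auto simp: a_def b_def)
  let ?S = "{disc_dist0 t | t f. t \<in> ball 0 1 \<and> f holomorphic_on ball 0 1 \<and>
       f ` ball 0 1 \<subseteq> \<Omega> \<and> f 0 = z \<and> f t = w}"
  have mem: "rho a b \<in> ?S"
  proof -
    define f where "f = (\<lambda>s. \<psi> (M (-a) s))"
    have ma: "cmod (-a) < 1" using a by simp
    have "f holomorphic_on ball 0 1"
      unfolding f_def
      by (rule holomorphic_on_compose_gen[OF M_holo[OF ma] psi_holo, unfolded o_def])
         (use M_norm[OF ma] in auto)
    moreover have "f ` ball 0 1 \<subseteq> \<Omega>" using M_norm[OF ma] psi_in by (auto simp: f_def)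
    moreover have "f 0 = z" using psi_g z by (simp add: f_def M_zero a_def)
    moreover have "f (M a b) = w" using M_inv[OF a b] psi_g w by (simp add: f_def b_def)
    moreover have "M a b \<in> ball 0 1" using M_norm[OF a b] by simp
    moreover have "disc_dist0 (M a b) = rho a b"
      by (simp add: disc_dist0_at rho_def M_def norm_divide norm_minus_commute)
    ultimately show ?thesis unfolding mem_Collect_eq
      by (intro exI[of _ "M a b"] exI[of _ f]) auto
  qed
  have low: "rho a b \<le> x" if "x \<in> ?S" for x
  proof -
    obtain t f where t: "t \<in> ball 0 1" and fh: "f holomorphic_on ball 0 1" and fi: "f ` ball 0 1 \<subseteq> \<Omega>"
      and f0: "f 0 = z" and ft: "f t = w" and x: "x = disc_dist0 t" using \<open>x \<in> ?S\<close> by blast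
    define u where "u = (\<lambda>s. M a (g (f s)))"
    have gf: "(g \<circ> f) holomorphic_on ball 0 1"
      by (rule holomorphic_on_compose_gen[OF fh g_holo fi])
    have uh: "u holomorphic_on ball 0 1"
      unfolding u_def
      by (rule holomorphic_on_compose_gen[OF gf M_holo[OF a], unfolded o_def]) (use g_in fi in auto)
    have u0: "u 0 = 0" by (simp add: u_def f0 a_def M_self)
    have un: "cmod (u s) < 1" if "cmod s < 1" for s
      using M_norm[OF a, of "g (f s)"] g_in[of "f s"] fi[unfolded image_subset_iff] that by (auto simp: u_def)
    have "cmod (u t) \<le> cmod t" using Schwarz_Lemma(1)[OF uh u0 un] t by simp
    moreover have "cmod (u t) = pd a b"
      by (simp add: u_def ft b_def M_def pd_def norm_divide norm_minus_commute)
    ultimately have "pd a b \<le> cmod t" by simp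
    then have "ath (pd a b) \<le> ath (cmod t)" using pd_bounds[OF a b] t by (intro ath_mono) auto
    then show ?thesis by (simp add: x disc_dist0_at rho_at)
  qed
  have "Inf ?S = rho a b" by (rule cInf_eq_minimum[OF mem low])
  then show ?thesis by (simp add: lempert_def a_def b_def)
qed

lemma chain_bound:
  "(\<forall>i\<le>n. p i \<in> \<Omega>) \<Longrightarrow> rho (g (p 0)) (g (p n)) \<le> (\<Sum>i<n. lempert \<Omega> (p i) (p (Suc i)))"
proof (induction n)
  case 0
  then show ?case by (simp add: rho_self)
next
  case (Suc n)
  have pin: "\<forall>i\<le>n. p i \<in> \<Omega>" using Suc.prems by auto
  have in3: "p 0 \<in> \<Omega>" "p n \<in> \<Omega>" "p (Suc n) \<in> \<Omega>" using Suc.prems by auto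
  have "rho (g (p 0)) (g (p (Suc n))) \<le> rho (g (p 0)) (g (p n)) + rho (g (p n)) (g (p (Suc n)))"
    using in3 g_in by (intro rho_triangle) auto
  also have "\<dots> \<le> (\<Sum>i<n. lempert \<Omega> (p i) (p (Suc i))) + lempert \<Omega> (p n) (p (Suc n))"
    using Suc.IH[OF pin] lempert_eq[OF in3(2,3)] by simp
  finally show ?case by simp
qed

lemma kobayashi_eq:
  assumes z: "z \<in> \<Omega>" and w: "w \<in> \<Omega>"
  shows "kobayashi \<Omega> z w = rho (g z) (g w)"
proof -
  let ?T = "{(\<Sum>i<n. lempert \<Omega> (p i) (p (Suc i))) | n p.
       p 0 = z \<and> p n = w \<and> (\<forall>i\<le>n. p i \<in> \<Omega>)}"
  have mem: "rho (g z) (g w) \<in> ?T"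
  proof -
    define p where "p = (\<lambda>i::nat. if i = 0 then z else w)"
    have "(\<Sum>i<1. lempert \<Omega> (p i) (p (Suc i))) = rho (g z) (g w)"
      using lempert_eq[OF z w] by (simp add: p_def)
    moreover have "p 0 = z \<and> p 1 = w \<and> (\<forall>i\<le>1. p i \<in> \<Omega>)" using z w by (simp add: p_def)
    ultimately show ?thesis unfolding mem_Collect_eq
      by (intro exI[of _ 1] exI[of _ p]) auto
  qed
  have low: "rho (g z) (g w) \<le> x" if xT: "x \<in> ?T" for x
  proof -
    obtain n p where x: "x = (\<Sum>i<n. lempert \<Omega> (p i) (p (Suc i)))" and p: "p 0 = z" "p n = w" "\<forall>i\<le>n. p i \<in> \<Omega>"
      using xT by blast
    show ?thesis using chain_bound[OF p(3)] p x by simp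
  qed
  show ?thesis unfolding kobayashi_def by (rule cInf_eq_minimum[OF mem low])
qed

end

definition Aq :: "complex \<Rightarrow> complex" where "Aq z = csqrt (\<i> * (1 + z))"
definition Bq :: "complex \<Rightarrow> complex" where "Bq z = csqrt (1 - z)"
definition Rr :: "complex \<Rightarrow> complex" where "Rr z = (Aq z - Bq z) / (Aq z + Bq z)"
definition Hm :: "complex \<Rightarrow> complex" where "Hm z = (Rr z)^2"

lemma csqrt_Re_pos: "Im w \<noteq> 0 \<Longrightarrow> 0 < Re (csqrt w)"
proof -
  assume "Im w \<noteq> 0"
  then have "\<bar>Re w\<bar>^2 < (cmod w)^2" by (simp add: cmod_power2)
  then have "\<bar>Re w\<bar> < cmod w" by (rule power2_less_imp_less) simp
  then show ?thesis by simp
qed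

lemma csqrt_Re_pos2: "0 < Re w \<Longrightarrow> 0 < Re (csqrt w)"
proof -
  assume "0 < Re w"
  moreover have "- Re w \<le> cmod w" using abs_Re_le_cmod[of w] by linarith
  ultimately have "0 < cmod w + Re w" using norm_ge_zero[of w] by linarith
  then show ?thesis by simp
qed

lemma csqrt_Im_pos: "0 < Im w \<Longrightarrow> 0 < Im (csqrt w)"
proof -
  assume a: "0 < Im w"
  then have "\<bar>Re w\<bar>^2 < (cmod w)^2" by (simp add: cmod_power2)
  then have "\<bar>Re w\<bar> < cmod w" by (rule power2_less_imp_less) simp
  then have "Re w < cmod w" by linarith
  then show ?thesis using a by simp
qed

lemma key_disc:
  assumes z: "cmod z < 1"
  shows "0 < Re (Aq z * cnj (Bq z))" "0 < Im (Aq z * cnj (Bq z))"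
proof -
  obtain p q where A: "Aq z = Complex p q" by (metis complex.exhaust)
  obtain u v where B: "Bq z = Complex u v" by (metis complex.exhaust)
  have rez: "\<bar>Re z\<bar> < 1" using z abs_Re_le_cmod[of z] by linarith
  have zz: "(Re z)^2 + (Im z)^2 < 1" using z by (simp add: cmod_def)
  have im: "Im (\<i> * (1 + z)) > 0" using rez by simp
  have "0 < Re (Aq z)" "0 < Im (Aq z)"
    unfolding Aq_def using csqrt_Re_pos[of "\<i> * (1 + z)"] csqrt_Im_pos[OF im] im by auto
  then have p: "p > 0" and q: "q > 0" using A by auto
  have "0 < Re (Bq z)" unfolding Bq_def by (rule csqrt_Re_pos2) (use rez in simp)
  then have u: "u > 0" using B by simp
  have A2: "(Aq z)^2 = \<i> * (1 + z)" by (simp add: Aq_def)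
  have B2: "(Bq z)^2 = 1 - z" by (simp add: Bq_def)
  from A2 have e1: "p*p - q*q = - Im z" and e2: "2*p*q = 1 + Re z"
    unfolding A by (simp_all add: power2_eq_square complex_eq_iff)
  from B2 have e3: "u*u - v * v = 1 - Re z" and e4: "2*u * v = - Im z"
    unfolding B by (simp_all add: power2_eq_square complex_eq_iff)
  have prod: "2 * ((p * u + q * v) * (q * u - p * v)) = 1 - (Re z)^2 - (Im z)^2"
  proof -
    have "2 * ((p * u + q * v) * (q * u - p * v)) = (2 * p * q) * (u * u - v * v) - (2 * u * v) * (p * p - q * q)"
      by (simp add: algebra_simps)
    also have "\<dots> = (1 + Re z) * (1 - Re z) - (- Im z) * (- Im z)" by (simp only: e1 e2 e3 e4)
    also have "\<dots> = 1 - (Re z)^2 - (Im z)^2" by (simp add: power2_eq_square algebra_simps)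
    finally show ?thesis .
  qed
  have pos: "(p*u + q * v) * (q*u - p * v) > 0" using prod zz by linarith
  have both: "p*u + q * v > 0 \<and> q*u - p * v > 0"
  proof (cases "v \<le> 0")
    case True
    then have "q*u - p * v > 0" using p q u by (smt (verit) mult_pos_pos mult_nonneg_nonpos)
    then show ?thesis using pos by (simp add: zero_less_mult_iff)
  next
    case False
    then have "p*u + q * v > 0" using p q u by (smt (verit) mult_pos_pos)
    then show ?thesis using pos by (simp add: zero_less_mult_iff)
  qed
  show "0 < Re (Aq z * cnj (Bq z))" "0 < Im (Aq z * cnj (Bq z))"
    using both by (simp_all add: A B algebra_simps)
qed

lemma Rr_props:
  assumes z: "cmod z < 1"
  shows "Aq z + Bq z \<noteq> 0" "0 < Im (Rr z)" "cmod (Rr z) < 1"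
proof -
  obtain p q where A: "Aq z = Complex p q" by (metis complex.exhaust)
  obtain u v where B: "Bq z = Complex u v" by (metis complex.exhaust)
  have k1: "p * u + q * v > 0" and k2: "q * u - p * v > 0" using key_disc[OF z] by (simp_all add: A B)
  have d: "(p+u)^2 + (q+v)^2 > (p-u)^2 + (q-v)^2" using k1 by (simp add: power2_eq_square algebra_simps)
  have dpos: "(p+u)^2 + (q+v)^2 > 0" using d by (smt (verit) sum_power2_ge_zero)
  then show nz: "Aq z + Bq z \<noteq> 0" by (auto simp: A B complex_eq_iff)
  have "Im (Rr z) = ((p+u)*(q-v) - (q+v)*(p-u)) / ((p+u)^2 + (q+v)^2)"
    by (simp add: Rr_def A B Im_divide)
  also have "(p + u) * (q - v) - (q + v) * (p - u) = 2 * (q * u - p * v)" by (simp add: algebra_simps)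
  finally show "0 < Im (Rr z)" using k2 dpos by simp
  have "cmod (Aq z - Bq z) < cmod (Aq z + Bq z)"
    using d by (simp add: A B cmod_def power2_eq_square)
  then show "cmod (Rr z) < 1" using nz by (simp add: Rr_def norm_divide)
qed

lemma Hm_holo: "Hm holomorphic_on ball 0 1"
proof -
  have r: "\<bar>Re z\<bar> < 1" if "z \<in> ball 0 1" for z :: complex
    using that abs_Re_le_cmod[of z] by simp
  have c1: "\<i> * (1 + z) \<notin> \<real>\<^sub>\<le>\<^sub>0" if "z \<in> ball 0 1" for z :: complex
    using that abs_Re_le_cmod[of z] by (auto simp add: complex_nonpos_Reals_iff abs_less_iff)
  have c2: "1 - z \<notin> \<real>\<^sub>\<le>\<^sub>0" if "z \<in> ball 0 1" for z :: complex
    using that abs_Re_le_cmod[of z] by (auto simp add: complex_nonpos_Reals_iff abs_less_iff)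
  have c3: "csqrt (\<i> * (1 + z)) + csqrt (1 - z) \<noteq> 0" if "z \<in> ball 0 1" for z :: complex
    using Rr_props(1)[of z] that by (simp add: Aq_def Bq_def)
  show ?thesis
    unfolding Hm_def Rr_def Aq_def Bq_def
    by (intro holomorphic_intros) (use c1 c2 c3 in auto)
qed

definition Om :: "complex set" where "Om = ball 0 1 - {complex_of_real t | t. 0 \<le> t \<and> t < 1}"

lemma sq_not_nonneg_real:
  assumes "0 < Im r" shows "\<not> (\<exists>t. 0 \<le> t \<and> r^2 = complex_of_real t)"
proof
  assume "\<exists>t. 0 \<le> t \<and> r^2 = complex_of_real t"
  then obtain t where t: "0 \<le> t" "r^2 = complex_of_real t" by blast
  then have "Im (r^2) = 0" "Re (r^2) = t" by simp_all
  then have h1: "2 * Re r * Im r = 0" and h2: "Re r * Re r - Im r * Im r = t" by (auto simp: power2_eq_square)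
  have "Im r \<noteq> 0" using assms by simp
  then have "Re r = 0" using h1 by simp
  then have h3: "- (Im r * Im r) = t" using h2 by simp
  have "Im r * Im r > 0" using assms by simp
  then show False using t h3 by linarith
qed

lemma Hm_in: assumes "z \<in> ball 0 1" shows "Hm z \<in> Om"
proof -
  have z: "cmod z < 1" using assms by simp
  have "cmod (Hm z) < 1" unfolding Hm_def using Rr_props(3)[OF z]
    by (simp add: norm_power power_less_one_iff)
  moreover have "\<not> (\<exists>t. 0 \<le> t \<and> Hm z = complex_of_real t)"
    unfolding Hm_def using sq_not_nonneg_real[OF Rr_props(2)[OF z]] .
  ultimately show ?thesis unfolding Om_def by auto
qed

lemma Hm_inj: "inj_on Hm (ball 0 1)"
proof
  fix z1 z2 assume z1: "z1 \<in> ball 0 1" and z2: "z2 \<in> ball 0 1" and e: "Hm z1 = Hm z2"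
  have n1: "cmod z1 < 1" and n2: "cmod z2 < 1" using z1 z2 by auto
  have "Rr z1 = Rr z2 \<or> Rr z1 = - Rr z2" using e unfolding Hm_def by (simp add: power2_eq_iff)
  moreover have "Rr z1 \<noteq> - Rr z2"
  proof
    assume "Rr z1 = - Rr z2"
    then have "Im (Rr z1) = - Im (Rr z2)" by simp
    then show False using Rr_props(2)[OF n1] Rr_props(2)[OF n2] by linarith
  qed
  ultimately have r: "Rr z1 = Rr z2" by blast
  have d1: "Aq z1 + Bq z1 \<noteq> 0" and d2: "Aq z2 + Bq z2 \<noteq> 0" using Rr_props(1) n1 n2 by auto
  from r have "(Aq z1 - Bq z1) * (Aq z2 + Bq z2) = (Aq z2 - Bq z2) * (Aq z1 + Bq z1)"
    using d1 d2 by (simp add: Rr_def frac_eq_eq)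
  then have "Aq z1 * Bq z2 = Aq z2 * Bq z1" by (simp add: algebra_simps)
  then have "(Aq z1)^2 * (Bq z2)^2 = (Aq z2)^2 * (Bq z1)^2" by (metis power_mult_distrib)
  then have "\<i> * (1 + z1) * (1 - z2) = \<i> * (1 + z2) * (1 - z1)" by (simp add: Aq_def Bq_def)
  then have "(1 + z1) * (1 - z2) = (1 + z2) * (1 - z1)" by simp
  then show "z1 = z2" by (simp add: algebra_simps)
qed

definition Zr :: "real \<Rightarrow> complex" where
  "Zr r = (complex_of_real ((1+r)^2) - \<i> * complex_of_real ((1-r)^2)) / (complex_of_real ((1+r)^2) + \<i> * complex_of_real ((1-r)^2))"

lemma csqrt_scale: assumes "0 \<le> t" shows "csqrt (complex_of_real (t^2) * w) = complex_of_real t * csqrt w"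
proof (rule csqrt_unique)
  show "(complex_of_real t * csqrt w)^2 = complex_of_real (t^2) * w" by (simp add: power_mult_distrib)
  show "0 < Re (complex_of_real t * csqrt w) \<or> Re (complex_of_real t * csqrt w) = 0 \<and> 0 \<le> Im (complex_of_real t * csqrt w)"
  proof (cases "t = 0")
    case True then show ?thesis by simp
  next
    case False
    then have t: "0 < t" using assms by simp
    show ?thesis using csqrt_principal[of w] t by (auto simp: mult_pos_pos)
  qed
qed

lemma Zr_props:
  assumes r: "-1 \<le> r" "r \<le> 1"
  shows "cmod (Zr r) = 1" "Rr (Zr r) = complex_of_real r" "Hm (Zr r) = complex_of_real (r^2)"
proof -
  define u where "u = (1+r)^2"
  define v where "v = (1-r)^2"
  define D where "D = complex_of_real u + \<i> * complex_of_real v"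
  have uvs: "u + v = 2 + 2 * r^2" by (simp add: u_def v_def power2_eq_square algebra_simps)
  have uv: "0 \<le> u" "0 \<le> v" "u + v > 0" unfolding u_def v_def
    using uvs by (simp_all add: u_def v_def) (smt (verit) zero_le_power2)
  have D: "D \<noteq> 0" using uv by (auto simp: D_def complex_eq_iff)
  have Zd: "Zr r = (complex_of_real u - \<i> * complex_of_real v) / D" by (simp add: Zr_def D_def u_def v_def)
  have "cmod (complex_of_real u - \<i> * complex_of_real v) = cmod D"
    by (simp add: D_def cmod_def)
  then show "cmod (Zr r) = 1" using D by (simp add: Zd norm_divide)
  define U where "U = complex_of_real u"
  define V where "V = complex_of_real v"
  have DUV: "D = U + \<i> * V" by (simp add: D_def U_def V_def)
  have Zd': "Zr r = (U - \<i> * V) / D" by (simp add: Zd U_def V_def)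
  have e1: "1 - Zr r = V * (2 * \<i> / D)"
  proof -
    have "1 - Zr r = (D - (U - \<i> * V)) / D" using D by (simp add: Zd' diff_divide_distrib)
    also have "D - (U - \<i> * V) = V * (2 * \<i>)" by (simp add: DUV algebra_simps)
    finally show ?thesis by simp
  qed
  have e2: "\<i> * (1 + Zr r) = U * (2 * \<i> / D)"
  proof -
    have "1 + Zr r = (D + (U - \<i> * V)) / D" using D by (simp add: Zd' add_divide_distrib)
    also have "D + (U - \<i> * V) = U * 2" by (simp add: DUV algebra_simps)
    finally show ?thesis by simp
  qed
  define c where "c = csqrt (2 * \<i> / D)"
  have c: "c \<noteq> 0" using D by (simp add: c_def)
  have B: "Bq (Zr r) = complex_of_real (1-r) * c"
    unfolding Bq_def e1 c_def V_def v_def using r by (intro csqrt_scale) simp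
  have A: "Aq (Zr r) = complex_of_real (1+r) * c"
    unfolding Aq_def e2 c_def U_def u_def using r by (intro csqrt_scale) simp
  show R: "Rr (Zr r) = complex_of_real r"
  proof -
    have n: "complex_of_real (1+r) * c - complex_of_real (1-r) * c = (complex_of_real r * c) * 2"
      by (simp add: algebra_simps)
    have d: "complex_of_real (1+r) * c + complex_of_real (1-r) * c = c * 2"
      by (simp add: algebra_simps)
    show ?thesis unfolding Rr_def A B n d using c by simp
  qed
  show "Hm (Zr r) = complex_of_real (r^2)" by (simp add: Hm_def R)
qed

lemma Hm_surj:
  assumes zO: "z \<in> Om"
  shows "\<exists>w\<in>ball 0 1. Hm w = z"
proof -
  have z1: "cmod z < 1" and znr: "\<not> (\<exists>t. 0 \<le> t \<and> t < 1 \<and> z = complex_of_real t)"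
    using zO by (auto simp: Om_def)
  have cpos: "0 < Re (csqrt (- z))"
  proof (cases "Im z = 0")
    case True
    have "Re z < 0"
    proof (rule ccontr)
      assume "\<not> Re z < 0"
      moreover have "Re z < 1" using z1 abs_Re_le_cmod[of z] by simp
      moreover have "z = complex_of_real (Re z)" using True by (simp add: complex_eq_iff)
      ultimately show False using znr by force
    qed
    then show ?thesis by (intro csqrt_Re_pos2) simp
  next
    case False
    then show ?thesis by (intro csqrt_Re_pos) simp
  qed
  define r where "r = \<i> * csqrt (- z)"
  have imr: "0 < Im r" using cpos by (simp add: r_def)
  have r2: "r^2 = z" by (simp add: r_def power_mult_distrib)
  have rn: "cmod r < 1" using z1 by (simp add: r_def norm_mult)
  have r1: "1 - r \<noteq> 0" using imr by auto
  have r0: "r \<noteq> 0" using imr by auto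
  define s where "s = (1 + r) / (1 - r)"
  have sm1: "s - 1 = 2 * r / (1 - r)" using r1 by (simp add: s_def field_simps)
  have sp1: "s + 1 = 2 / (1 - r)" using r1 by (simp add: s_def field_simps)
  obtain a b where rab: "r = Complex a b" by (metis complex.exhaust)
  have b: "0 < b" using imr rab by simp
  have ab: "a^2 + b^2 < 1" using rn rab by (simp add: cmod_def)
  have den: "0 < (1 - a)^2 + b^2" using b by (smt (verit) zero_le_power2 zero_less_power2)
  have res: "0 < Re s"
  proof -
    have "Re s = ((1 + a) * (1 - a) + b * (- b)) / ((1 - a)^2 + (- b)^2)"
      by (simp add: s_def rab Re_divide)
    also have "\<dots> = (1 - a^2 - b^2) / ((1 - a)^2 + b^2)" by (simp add: power2_eq_square algebra_simps)
    finally show ?thesis using ab den by simp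
  qed
  have ims: "0 < Im s"
  proof -
    have "Im s = ((1 - a) * b - (- b) * (1 + a)) / ((1 - a)^2 + (- b)^2)"
      by (simp add: s_def rab Im_divide)
    also have "\<dots> = (2 * b) / ((1 - a)^2 + b^2)" by (simp add: power2_eq_square algebra_simps)
    finally show ?thesis using b den by simp
  qed
  define q where "q = s^2"
  have imq: "0 < Im q" using res ims by (simp add: q_def power2_eq_square)
  have qi: "q + \<i> \<noteq> 0" using imq by (auto simp: complex_eq_iff)
  define w where "w = (q - \<i>) / (q + \<i>)"
  have "cmod (q - \<i>) < cmod (q + \<i>)"
  proof -
    have "(cmod (q - \<i>))^2 < (cmod (q + \<i>))^2"
      using imq unfolding cmod_power2 by (simp add: power2_eq_square algebra_simps)
    then show ?thesis by (rule power2_less_imp_less) simp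
  qed
  then have wn: "cmod w < 1" using qi by (simp add: w_def norm_divide)
  have om: "1 - w = 2 * \<i> / (q + \<i>)"
    using qi unfolding w_def by (simp add: field_simps)
  have op: "1 + w = 2 * q / (q + \<i>)"
    using qi unfolding w_def by (simp add: field_simps)
  have Bnz: "Bq w \<noteq> 0" using qi by (simp add: Bq_def om)
  have "(Aq w / Bq w)^2 = \<i> * (1 + w) / (1 - w)"
    by (simp add: power_divide Aq_def Bq_def)
  also have "\<dots> = q"
  proof -
    have g: "\<And>X. X \<noteq> 0 \<Longrightarrow> \<i> * (2 * q / X) / (2 * \<i> / X) = q" by (simp add: field_simps)
    show ?thesis unfolding om op by (rule g[OF qi])
  qed
  finally have "(Aq w / Bq w)^2 = s^2" by (simp add: q_def)
  then have AB: "Aq w / Bq w = s \<or> Aq w / Bq w = - s" by (simp add: power2_eq_iff)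
  have Rq: "Rr w = (Aq w / Bq w - 1) / (Aq w / Bq w + 1)"
    using Bnz by (simp add: Rr_def divide_simps)
  have Rim: "0 < Im (Rr w)" using Rr_props(2) wn by simp
  have Rr: "Rr w = r"
  proof (cases "Aq w / Bq w = s")
    case True
    then show ?thesis using r1 r0 by (simp add: Rq sm1 sp1)
  next
    case False
    then have "Aq w / Bq w = - s" using AB by simp
    then have "Rr w = (- s - 1) / (- s + 1)" unfolding Rq by simp
    also have "\<dots> = (- (s + 1)) / (- (s - 1))" by (simp add: algebra_simps)
    also have "\<dots> = (s + 1) / (s - 1)" by (rule minus_divide_divide)
    also have "\<dots> = 1 / r"
    proof -
      have g: "\<And>X. X \<noteq> 0 \<Longrightarrow> (2 / X) / (2 * r / X) = 1 / r" using r0 by (simp add: field_simps)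
      show ?thesis unfolding sm1 sp1 by (rule g[OF r1])
    qed
    finally have "Rr w = 1 / r" .
    then have "Im (Rr w) = - b / (a^2 + b^2)" by (simp add: rab Im_divide power2_eq_square)
    moreover have "0 < a^2 + b^2" using b by (smt (verit) zero_le_power2 zero_less_power2)
    ultimately have "Im (Rr w) < 0" using b by (simp add: divide_neg_pos)
    then show ?thesis using Rim by simp
  qed
  show ?thesis using wn r2 by (intro bexI[of _ w]) (auto simp: Hm_def Rr)
qed

lemma isCont_csqrt0: "isCont csqrt 0"
proof -
  have "((\<lambda>z::complex. cmod z) \<longlongrightarrow> 0) (at 0)"
    using tendsto_norm_zero[OF tendsto_ident_at[of 0 UNIV]] by simp
  then have "((\<lambda>z::complex. sqrt (cmod z)) \<longlongrightarrow> sqrt 0) (at 0)" by (rule tendsto_real_sqrt)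
  then have "((\<lambda>z. norm (csqrt z)) \<longlongrightarrow> 0) (at 0)" by simp
  then have "(csqrt \<longlongrightarrow> 0) (at 0)" by (rule tendsto_norm_zero_cancel)
  then show ?thesis unfolding isCont_def by simp
qed

lemma isCont_csqrt_gen: "z \<notin> \<real>\<^sub>\<le>\<^sub>0 \<or> z = 0 \<Longrightarrow> isCont csqrt z"
  using continuous_at_csqrt isCont_csqrt0 by auto

lemma csqrt_Re0: "Re (csqrt w) = 0 \<Longrightarrow> w \<in> \<real>\<^sub>\<le>\<^sub>0"
proof -
  assume "Re (csqrt w) = 0"
  then have "cmod w + Re w = 0" by simp
  then have "(cmod w)^2 = (Re w)^2" by (metis add_eq_0_iff power2_minus)
  then have "Im w = 0" by (simp add: cmod_power2)
  moreover have "Re w \<le> 0" using \<open>cmod w + Re w = 0\<close> norm_ge_zero[of w] by linarith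
  ultimately show ?thesis by (simp add: complex_nonpos_Reals_iff)
qed

lemma cball_A: assumes "cmod z \<le> 1" shows "\<i> * (1 + z) \<notin> \<real>\<^sub>\<le>\<^sub>0 \<or> z = -1"
proof (rule ccontr)
  assume "\<not> ?thesis"
  then have "1 + Re z = 0" "z \<noteq> -1" by (auto simp: complex_nonpos_Reals_iff)
  moreover have "(Re z)^2 + (Im z)^2 \<le> 1"
  proof -
    have "(cmod z)^2 \<le> 1" using assms by (simp add: power_le_one)
    then show ?thesis by (simp add: cmod_power2)
  qed
  ultimately have "Re z = -1" "(Re z)^2 + (Im z)^2 \<le> 1" by auto
  then have "(Im z)^2 \<le> 0" by simp
  then have "Im z = 0" by simp
  then show False using \<open>1 + Re z = 0\<close> \<open>z \<noteq> -1\<close> by (simp add: complex_eq_iff)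
qed

lemma cball_B: assumes "cmod z \<le> 1" shows "1 - z \<notin> \<real>\<^sub>\<le>\<^sub>0 \<or> z = 1"
proof (rule ccontr)
  assume "\<not> ?thesis"
  then have "Im z = 0" "1 \<le> Re z" "z \<noteq> 1" by (auto simp: complex_nonpos_Reals_iff)
  moreover have "Re z \<le> 1" using assms abs_Re_le_cmod[of z] by simp
  ultimately show False by (simp add: complex_eq_iff)
qed

lemma AB_nz: assumes "cmod z \<le> 1" shows "Aq z + Bq z \<noteq> 0"
proof
  assume e: "Aq z + Bq z = 0"
  have s: "Re (Aq z) + Re (Bq z) = 0" using arg_cong[OF e, of Re] by simp
  have n: "0 \<le> Re (Aq z)" "0 \<le> Re (Bq z)" unfolding Aq_def Bq_def by (simp_all only: Re_csqrt)
  have "Re (Aq z) = 0" "Re (Bq z) = 0" using s n by linarith+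
  then have "\<i> * (1 + z) \<in> \<real>\<^sub>\<le>\<^sub>0" "1 - z \<in> \<real>\<^sub>\<le>\<^sub>0" unfolding Aq_def Bq_def by (auto intro: csqrt_Re0)
  then have "z = -1" "z = 1" using cball_A[OF assms] cball_B[OF assms] by auto
  then show False by simp
qed

lemma Hm_cont: "continuous_on (cball 0 1) Hm"
proof (rule continuous_at_imp_continuous_on, rule ballI)
  fix z :: complex assume "z \<in> cball 0 1"
  then have z: "cmod z \<le> 1" by simp
  have a: "isCont Aq z" unfolding Aq_def
    by (rule continuous_at_compose[OF _ isCont_csqrt_gen, unfolded o_def])
       (use cball_A[OF z] in auto)
  have b: "isCont Bq z" unfolding Bq_def
    by (rule continuous_at_compose[OF _ isCont_csqrt_gen, unfolded o_def])
       (use cball_B[OF z] in auto)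
  show "isCont Hm z" unfolding Hm_def Rr_def
    using a b AB_nz[OF z] by (intro continuous_intros) auto
qed

lemma norm_gap: "(cmod (1 - cnj a * b))^2 - (cmod (a - b))^2 = (1 - (cmod a)^2) * (1 - (cmod b)^2)"
  unfolding cmod_power2 by (cases a; cases b) (simp add: power2_eq_square algebra_simps)

lemma M_norm_le: assumes a: "cmod a < 1" and z: "cmod z \<le> 1" shows "cmod (M a z) \<le> 1"
proof -
  have nz: "1 - cnj a * z \<noteq> 0" using denom_nz a z by simp
  have "0 \<le> (1 - (cmod a)^2) * (1 - (cmod z)^2)" using a z
    by (intro mult_nonneg_nonneg) (auto simp: abs_square_le_1 power_le_one)
  then have "(cmod (a - z))^2 \<le> (cmod (1 - cnj a * z))^2"
    using norm_gap[of a z] by linarith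
  then have "cmod (a - z) \<le> cmod (1 - cnj a * z)" by (rule power2_le_imp_le) simp
  then have "cmod (z - a) \<le> cmod (1 - cnj a * z)" by (simp add: norm_minus_commute)
  then show ?thesis using nz by (simp add: M_def norm_divide divide_le_eq_1)
qed

lemma M_cont: assumes a: "cmod a < 1" shows "continuous_on (cball 0 1) (M a)"
  unfolding M_def using denom_nz[OF a] by (intro continuous_intros) auto

lemma M_inv_le: assumes a: "cmod a < 1" and w: "cmod w \<le> 1" shows "M a (M (-a) w) = w"
proof -
  have d: "1 + cnj a * w \<noteq> 0" using denom_nz[of "-a" w] a w by simp
  have aa: "1 - cnj a * a \<noteq> 0" using denom_nz[of a a] a by simp
  have e: "M (-a) w = (w + a) / (1 + cnj a * w)" by (simp add: M_def)
  have "M a (M (-a) w) = ((w + a) - a * (1 + cnj a * w)) / ((1 + cnj a * w) - cnj a * (w + a))"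
  proof -
    have g: "\<And>W D A C :: complex. D \<noteq> 0 \<Longrightarrow> (W/D - A)/(1 - C*(W/D)) = (W - A*D)/(D - C*W)"
    proof -
      fix W D A C :: complex assume D: "D \<noteq> 0"
      have "W/D - A = (W - A*D)/D" "1 - C*(W/D) = (D - C*W)/D" using D by (simp_all add: field_simps)
      then show "(W/D - A)/(1 - C*(W/D)) = (W - A*D)/(D - C*W)" using D by simp
    qed
    show ?thesis unfolding M_def[of a] e by (rule g[OF d])
  qed
  also have "(w + a) - a * (1 + cnj a * w) = w * (1 - cnj a * a)" by (simp add: algebra_simps)
  also have "(1 + cnj a * w) - cnj a * (w + a) = 1 - cnj a * a" by (simp add: algebra_simps)
  finally show ?thesis using aa by simp
qed

lemma disc_auto:
  assumes mh: "m holomorphic_on ball 0 1" and nh: "n holomorphic_on ball 0 1"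
    and mi: "\<And>z. z \<in> ball 0 1 \<Longrightarrow> m z \<in> ball 0 1" and ni: "\<And>z. z \<in> ball 0 1 \<Longrightarrow> n z \<in> ball 0 1"
    and mn: "\<And>z. z \<in> ball 0 1 \<Longrightarrow> m (n z) = z" and nm: "\<And>z. z \<in> ball 0 1 \<Longrightarrow> n (m z) = z"
  shows "\<exists>\<alpha> a. cmod \<alpha> = 1 \<and> cmod a < 1 \<and> (\<forall>z\<in>ball 0 1. m z = \<alpha> * M a z)"
proof -
  define a where "a = n 0"
  have a: "cmod a < 1" using ni[of 0] by (simp add: a_def)
  have ma: "m a = 0" using mn[of 0] by (simp add: a_def)
  have ma': "cmod (-a) < 1" using a by simp
  define v where "v = (\<lambda>z. m (M (-a) z))"
  define v' where "v' = (\<lambda>z. M a (n z))"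
  have vh: "v holomorphic_on ball 0 1" unfolding v_def
    by (rule holomorphic_on_compose_gen[OF M_holo[OF ma'] mh, unfolded o_def]) (use M_norm[OF ma'] in auto)
  have v'h: "v' holomorphic_on ball 0 1" unfolding v'_def
    by (rule holomorphic_on_compose_gen[OF nh M_holo[OF a], unfolded o_def]) (use ni in auto)
  have v0: "v 0 = 0" by (simp add: v_def M_zero ma)
  have v'0: "v' 0 = 0" by (simp add: v'_def a_def[symmetric] M_self)
  have vn: "cmod (v z) < 1" if "cmod z < 1" for z
    using mi[of "M (-a) z"] M_norm[OF ma' that] by (simp add: v_def)
  have v'n: "cmod (v' z) < 1" if "cmod z < 1" for z
    using ni[of z] M_norm[OF a, of "n z"] that by (simp add: v'_def)
  have vv: "v' (v z) = z" if "cmod z < 1" for z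
  proof -
    have "M (-a) z \<in> ball 0 1" using M_norm[OF ma' that] by simp
    then have "n (v z) = M (-a) z" by (simp add: v_def nm)
    then show ?thesis using M_inv[OF ma' that] by (simp add: v'_def)
  qed
  define z0 :: complex where "z0 = 1/2"
  have z0: "cmod z0 < 1" "z0 \<noteq> 0" by (auto simp: z0_def)
  have "cmod (v z0) \<le> cmod z0" using Schwarz_Lemma(1)[OF vh v0 vn z0(1)] .
  moreover have "cmod (v' (v z0)) \<le> cmod (v z0)" using Schwarz_Lemma(1)[OF v'h v'0 v'n vn[OF z0(1)]] .
  ultimately have "cmod (v z0) = cmod z0" using vv[OF z0(1)] by simp
  then obtain \<alpha> where al: "\<forall>z. cmod z < 1 \<longrightarrow> v z = \<alpha> * z" and an: "cmod \<alpha> = 1"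
    using Schwarz_Lemma(3)[OF vh v0 vn z0(1)] z0 by blast
  have "m z = \<alpha> * M a z" if "z \<in> ball 0 1" for z
  proof -
    have z: "cmod z < 1" using that by simp
    have "m z = v (M a z)" using M_inv[OF a z] by (simp add: v_def)
    also have "\<dots> = \<alpha> * M a z" using al M_norm[OF a z] by simp
    finally show ?thesis .
  qed
  then show ?thesis using an a by blast
qed

lemma Hm_image: "Hm ` ball 0 1 = Om"
  using Hm_in Hm_surj by blast

lemma construct:
  assumes holo: "\<psi> holomorphic_on ball 0 1" and bij: "bij_betw \<psi> (ball 0 1) Om"
  obtains g P where "rmap Om \<psi> g" "continuous_on (cball 0 1) P" "\<forall>z\<in>ball 0 1. P z = \<psi> z"
    "\<forall>x::real. 0 < x \<and> x \<le> 1 \<longrightarrow> (\<exists>e1 e2. e1 \<in> cball 0 1 \<and> e2 \<in> cball 0 1 \<and> e1 \<noteq> e2 \<and>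
         P e1 = complex_of_real x \<and> P e2 = complex_of_real x)"
proof -
  have inj: "inj_on \<psi> (ball 0 1)" using bij by (rule bij_betw_imp_inj_on)
  have im: "\<psi> ` ball 0 1 = Om" using bij by (rule bij_betw_imp_surj_on)
  obtain g where gh: "g holomorphic_on (\<psi> ` ball 0 1)" and gp: "\<And>z. z \<in> ball 0 1 \<Longrightarrow> g (\<psi> z) = z"
    using holomorphic_has_inverse[OF holo open_ball inj] by metis
  have psi_in: "\<And>a. a \<in> ball 0 1 \<Longrightarrow> \<psi> a \<in> Om" using im by blast
  have g_in: "\<And>w. w \<in> Om \<Longrightarrow> g w \<in> ball 0 1"
  proof -
    fix w assume "w \<in> Om"
    then obtain z where "z \<in> ball 0 1" "w = \<psi> z" using im by blast
    then show "g w \<in> ball 0 1" using gp by simp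
  qed
  have psi_g: "\<And>w. w \<in> Om \<Longrightarrow> \<psi> (g w) = w"
  proof -
    fix w assume "w \<in> Om"
    then obtain z where "z \<in> ball 0 1" "w = \<psi> z" using im by blast
    then show "\<psi> (g w) = w" using gp by simp
  qed
  have rm: "rmap Om \<psi> g"
    by (unfold_locales) (use holo gh im psi_in g_in gp psi_g in auto)
  obtain Hi where Hih: "Hi holomorphic_on (Hm ` ball 0 1)" and Hip: "\<And>z. z \<in> ball 0 1 \<Longrightarrow> Hi (Hm z) = z"
    using holomorphic_has_inverse[OF Hm_holo open_ball Hm_inj] by metis
  have Hi_in: "\<And>w. w \<in> Om \<Longrightarrow> Hi w \<in> ball 0 1"
  proof -
    fix w assume "w \<in> Om"
    then obtain z where "z \<in> ball 0 1" "w = Hm z" using Hm_image by blast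
    then show "Hi w \<in> ball 0 1" using Hip by simp
  qed
  have Hm_Hi: "\<And>w. w \<in> Om \<Longrightarrow> Hm (Hi w) = w"
  proof -
    fix w assume "w \<in> Om"
    then obtain z where "z \<in> ball 0 1" "w = Hm z" using Hm_image by blast
    then show "Hm (Hi w) = w" using Hip by simp
  qed
  define m where "m = (\<lambda>z. Hi (\<psi> z))"
  define n where "n = (\<lambda>z. g (Hm z))"
  have mh: "m holomorphic_on ball 0 1" unfolding m_def
    by (rule holomorphic_on_compose_gen[OF holo Hih, unfolded o_def]) (use psi_in Hm_image in auto)
  have nh: "n holomorphic_on ball 0 1" unfolding n_def
    by (rule holomorphic_on_compose_gen[OF Hm_holo gh, unfolded o_def]) (use Hm_in im in auto)
  have mi: "\<And>z. z \<in> ball 0 1 \<Longrightarrow> m z \<in> ball 0 1" unfolding m_def using Hi_in psi_in by auto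
  have ni: "\<And>z. z \<in> ball 0 1 \<Longrightarrow> n z \<in> ball 0 1" unfolding n_def using g_in Hm_in by auto
  have mn: "\<And>z. z \<in> ball 0 1 \<Longrightarrow> m (n z) = z" unfolding m_def n_def using psi_g Hm_in Hip by auto
  have nm: "\<And>z. z \<in> ball 0 1 \<Longrightarrow> n (m z) = z" unfolding m_def n_def using Hm_Hi psi_in gp by auto
  obtain \<alpha> a where al: "cmod \<alpha> = 1" and a: "cmod a < 1" and mf: "\<forall>z\<in>ball 0 1. m z = \<alpha> * M a z"
    using disc_auto[OF mh nh mi ni mn nm] by blast
  define P where "P = (\<lambda>z. Hm (\<alpha> * M a z))"
  have cP: "continuous_on (cball 0 1) P" unfolding P_def
  proof (rule continuous_on_compose2[OF Hm_cont])
    show "continuous_on (cball 0 1) (\<lambda>z. \<alpha> * M a z)" using M_cont[OF a] by (intro continuous_intros)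
    show "(\<lambda>z. \<alpha> * M a z) ` cball 0 1 \<subseteq> cball 0 1" using M_norm_le[OF a] al by (auto simp: norm_mult)
  qed
  have Pp: "\<forall>z\<in>ball 0 1. P z = \<psi> z"
  proof
    fix z :: complex assume z: "z \<in> ball 0 1"
    have "\<psi> z = Hm (m z)" using Hm_Hi psi_in z by (simp add: m_def)
    then show "P z = \<psi> z" using mf z by (simp add: P_def)
  qed
  have aa: "\<alpha> * cnj \<alpha> = 1" using al by (metis complex_norm_square norm_one of_real_1 power_one)
  have two: "\<exists>e1 e2. e1 \<in> cball 0 1 \<and> e2 \<in> cball 0 1 \<and> e1 \<noteq> e2 \<and>
         P e1 = complex_of_real x \<and> P e2 = complex_of_real x" if x: "0 < x" "x \<le> 1" for x :: real
  proof -
    define t where "t = sqrt x"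
    have t: "0 < t" "t \<le> 1" "t^2 = x" using x by (auto simp: t_def)
    have pre: "\<exists>e \<in> cball 0 1. \<alpha> * M a e = \<zeta>" if "cmod \<zeta> = 1" for \<zeta>
    proof -
      have c: "cmod (cnj \<alpha> * \<zeta>) \<le> 1" using that al by (simp add: norm_mult)
      have "M (-a) (cnj \<alpha> * \<zeta>) \<in> cball 0 1" using M_norm_le[of "-a"] a c by simp
      moreover have "\<alpha> * M a (M (-a) (cnj \<alpha> * \<zeta>)) = \<zeta>"
        using M_inv_le[OF a c] aa by (simp add: mult.assoc[symmetric])
      ultimately show ?thesis by blast
    qed
    obtain e1 where e1: "e1 \<in> cball 0 1" "\<alpha> * M a e1 = Zr t" using pre Zr_props(1)[of t] t by force
    obtain e2 where e2: "e2 \<in> cball 0 1" "\<alpha> * M a e2 = Zr (-t)" using pre Zr_props(1)[of "-t"] t by force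
    have P1: "P e1 = complex_of_real x" using Zr_props(3)[of t] t e1 by (simp add: P_def)
    have P2: "P e2 = complex_of_real x" using Zr_props(3)[of "-t"] t e2 by (simp add: P_def)
    have "e1 \<noteq> e2"
    proof
      assume "e1 = e2"
      then have "Zr t = Zr (-t)" using e1 e2 by simp
      then have "Rr (Zr t) = Rr (Zr (-t))" by simp
      then have "complex_of_real t = complex_of_real (-t)" using Zr_props(2)[of t] Zr_props(2)[of "-t"] t by simp
      then show False using t by simp
    qed
    then show ?thesis using e1 e2 P1 P2 by blast
  qed
  show ?thesis using that[OF rm cP Pp] two by blast
qed

lemma F_formula:
  assumes a: "cmod a < 1" and b: "cmod b < 1"
  shows "rho a b - rho 0 b = (1/2) * ln ((1 + pd a b)^2 * (cmod (1 - cnj a * b))^2 / ((1 - (cmod a)^2) * (1 + cmod b)^2))"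
proof -
  define d where "d = pd a b"
  define s where "s = cmod b"
  define A where "A = 1 - (cmod a)^2"
  define E where "E = (cmod (1 - cnj a * b))^2"
  have d: "0 \<le> d" "d < 1" using pd_bounds[OF a b] by (auto simp: d_def)
  have s: "0 \<le> s" "s < 1" using b by (auto simp: s_def)
  have A: "0 < A" using a by (simp add: A_def abs_square_less_1)
  have nz: "1 - cnj a * b \<noteq> 0" using denom_nz a b by simp
  have E: "0 < E" using nz by (simp add: E_def)
  have rel: "(1 - d) * (1 + d) * E = A * (1 - s) * (1 + s)"
  proof -
    have "1 - d^2 = A * (1 - s^2) / E" using key_identity[OF nz] by (simp add: d_def pd_def A_def s_def E_def)
    then have "(1 - d^2) * E = A * (1 - s^2)" using E by (simp add: field_simps)
    then show ?thesis by (simp add: power2_eq_square algebra_simps)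
  qed
  have r0: "rho 0 b = ath s" by (simp add: rho_at pd_def s_def)
  have X: "0 < (1+d)/(1-d)" and Y: "0 < (1+s)/(1-s)" using d s by auto
  have "rho a b - rho 0 b = (1/2) * (ln ((1+d)/(1-d)) - ln ((1+s)/(1-s)))"
  proof -
    have p0: "pd 0 b = s" by (simp add: pd_def s_def)
    show ?thesis by (simp add: rho_at p0 ath_def d_def[symmetric] algebra_simps)
  qed
  also have "ln ((1+d)/(1-d)) - ln ((1+s)/(1-s)) = ln (((1+d)/(1-d)) / ((1+s)/(1-s)))"
    using ln_divide_pos[OF X Y] by simp
  also have "((1+d)/(1-d)) / ((1+s)/(1-s)) = (1 + d)^2 * E / (A * (1 + s)^2)"
  proof -
    have n1: "(1-d) * (1+s) \<noteq> 0" "A * (1+s)^2 \<noteq> 0" using d s A by auto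
    have "((1+d)/(1-d)) / ((1+s)/(1-s)) = ((1+d) * (1-s)) / ((1-d) * (1+s))"
      using d s by (simp add: field_simps)
    also have "\<dots> = (1 + d)^2 * E / (A * (1 + s)^2)"
    proof (subst frac_eq_eq[OF n1])
      have "(1 + d)^2 * E * ((1 - d) * (1 + s)) = (1+d) * (1+s) * ((1 - d) * (1 + d) * E)"
        by (simp add: power2_eq_square algebra_simps)
      also have "\<dots> = (1+d) * (1+s) * (A * (1 - s) * (1 + s))" by (simp only: rel)
      also have "\<dots> = (1 + d) * (1 - s) * (A * (1 + s)^2)" by (simp add: power2_eq_square algebra_simps)
      finally show "(1 + d) * (1 - s) * (A * (1 + s)^2) = (1 + d)^2 * E * ((1 - d) * (1 + s))" by simp
    qed
    finally show ?thesis .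
  qed
  finally show ?thesis by (simp add: d_def E_def A_def s_def)
qed

lemma F_lower:
  assumes a: "cmod a < 1" and b: "cmod b < 1" and del: "0 < \<delta>" "\<delta> \<le> cmod (b - a)"
  shows "(1/2) * ln (\<delta>^2 / (4 * (1 - (cmod a)^2))) \<le> rho a b - rho 0 b"
proof -
  define d where "d = pd a b"
  define A where "A = 1 - (cmod a)^2"
  define E where "E = (cmod (1 - cnj a * b))^2"
  have d: "0 \<le> d" using pd_bounds[OF a b] by (auto simp: d_def)
  have A: "0 < A" using a by (simp add: A_def abs_square_less_1)
  have A1: "A \<le> 1" by (simp add: A_def)
  have sb: "(1 + cmod b)^2 \<le> 4" using b power_mono[of "1 + cmod b" 2 2] by simp
  have sb0: "0 < (1 + cmod b)^2" by (smt (verit) norm_ge_zero zero_less_power2)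
  have gap: "E - (cmod (a - b))^2 = A * (1 - (cmod b)^2)" using norm_gap[of a b] by (simp add: E_def A_def)
  have "0 \<le> A * (1 - (cmod b)^2)" using A b by (simp add: abs_square_le_1 less_imp_le)
  then have "(cmod (b - a))^2 \<le> E" using gap by (simp add: norm_minus_commute)
  moreover have "\<delta>^2 \<le> (cmod (b - a))^2" using del by (simp add: power_mono)
  ultimately have dE: "\<delta>^2 \<le> E" by linarith
  have E0: "0 \<le> E" by (simp add: E_def)
  have d1: "1 \<le> (1 + d)^2" using d by (smt (verit) one_le_power)
  have "\<delta>^2 / (4 * A) \<le> E / (A * (1 + cmod b)^2)"
  proof -
    have "\<delta>^2 / (4 * A) \<le> E / (4 * A)" using dE A by (simp add: divide_right_mono)
    also have "\<dots> \<le> E / (A * (1 + cmod b)^2)" using A sb sb0 dE del E0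
      by (intro divide_left_mono) (auto intro: mult_left_mono mult_pos_pos)
    finally show ?thesis .
  qed
  also have "\<dots> \<le> (1 + d)^2 * E / (A * (1 + cmod b)^2)"
  proof (rule divide_right_mono)
    show "E \<le> (1 + d)^2 * E" using d1 E0 mult_right_mono[OF d1 E0] by simp
    show "0 \<le> A * (1 + cmod b)^2" using A sb0 by simp
  qed
  finally have le: "\<delta>^2 / (4 * A) \<le> (1 + d)^2 * E / (A * (1 + cmod b)^2)" .
  have pos: "0 < \<delta>^2 / (4 * A)" using del A by simp
  have "ln (\<delta>^2 / (4 * A)) \<le> ln ((1 + d)^2 * E / (A * (1 + cmod b)^2))"
    using le pos by simp
  then show ?thesis using F_formula[OF a b] by (simp add: d_def E_def A_def)
qed

lemma F_upper:
  assumes a: "cmod a < 1" and b: "cmod b < 1"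
  shows "rho a b - rho 0 b \<le> (1/2) * ln (4 * (cmod (1 - cnj a * b))^2 / (1 - (cmod a)^2))"
proof -
  define d where "d = pd a b"
  define A where "A = 1 - (cmod a)^2"
  define E where "E = (cmod (1 - cnj a * b))^2"
  have d: "0 \<le> d" "d < 1" using pd_bounds[OF a b] by (auto simp: d_def)
  have A: "0 < A" using a by (simp add: A_def abs_square_less_1)
  have nz: "1 - cnj a * b \<noteq> 0" using denom_nz a b by simp
  have E: "0 < E" using nz by (simp add: E_def)
  have d4: "(1 + d)^2 \<le> 4" using d power_mono[of "1 + d" 2 2] by simp
  have b1: "1 \<le> (1 + cmod b)^2" by (smt (verit) norm_ge_zero one_le_power)
  have bb: "0 < 1 + cmod b" by (smt (verit) norm_ge_zero)
  have pos: "0 < (1 + d)^2 * E / (A * (1 + cmod b)^2)" using d E A b1 bb by (intro divide_pos_pos mult_pos_pos) auto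
  have "(1 + d)^2 * E / (A * (1 + cmod b)^2) \<le> 4 * E / (A * (1 + cmod b)^2)"
    using d4 E A b1 by (intro divide_right_mono mult_right_mono) auto
  also have "\<dots> \<le> 4 * E / A"
  proof (rule divide_left_mono)
    show "A \<le> A * (1 + cmod b)^2" using A b1 mult_left_mono[OF b1, of A] by simp
    show "0 \<le> 4 * E" using E by simp
    show "0 < A * (1 + cmod b)^2 * A" using A bb by simp
  qed
  finally have "ln ((1 + d)^2 * E / (A * (1 + cmod b)^2)) \<le> ln (4 * E / A)" using pos by simp
  then show ?thesis using F_formula[OF a b] by (simp add: d_def E_def A_def)
qed

lemma Liminf_le_freq:
  fixes f :: "'a \<Rightarrow> ereal"
  assumes "\<And>Pr. eventually Pr F \<Longrightarrow> \<exists>y. Pr y \<and> f y \<le> C"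
  shows "Liminf F f \<le> C"
proof (rule Liminf_least)
  fix Pr assume "eventually Pr F"
  then obtain y where "Pr y" "f y \<le> C" using assms by blast
  then show "(INF x\<in>Collect Pr. f x) \<le> C" by (meson INF_lower2 mem_Collect_eq)
qed

lemma Limsup_ge_freq:
  fixes f :: "'a \<Rightarrow> ereal"
  assumes "\<And>Pr. eventually Pr F \<Longrightarrow> \<exists>y. Pr y \<and> C \<le> f y"
  shows "C \<le> Limsup F f"
proof (rule Limsup_greatest)
  fix Pr assume "eventually Pr F"
  then obtain y where "Pr y" "C \<le> f y" using assms by blast
  then show "C \<le> (SUP x\<in>Collect Pr. f x)" by (meson SUP_upper2 mem_Collect_eq)
qed

locale pset = rmap \<Omega> \<psi> g for \<Omega> \<psi> g +
  fixes P :: "complex \<Rightarrow> complex"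
  assumes P_cont: "continuous_on (cball 0 1) P"
    and P_psi: "\<forall>z\<in>ball 0 1. P z = \<psi> z"
    and Om_open: "open \<Omega>"
begin

definition Kx :: "complex \<Rightarrow> complex set" where "Kx x = {e \<in> cball 0 1. P e = x}"

lemma g0: "g (\<psi> 0) = 0" using g_psi[of 0] by simp

lemma ff_eq:
  assumes "z \<in> \<Omega>" "w \<in> \<Omega>"
  shows "kobayashi \<Omega> z w - kobayashi \<Omega> (\<psi> 0) w = rho (g z) (g w) - rho 0 (g w)"
proof -
  have "\<psi> 0 \<in> \<Omega>" using psi_in[of 0] by simp
  then show ?thesis using kobayashi_eq assms g0 by simp
qed

lemma K_sphere: assumes "x \<notin> \<Omega>" "e \<in> Kx x" shows "cmod e = 1"
proof -
  have e: "cmod e \<le> 1" "P e = x" using assms by (auto simp: Kx_def)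
  show ?thesis
  proof (rule ccontr)
    assume "cmod e \<noteq> 1"
    then have "e \<in> ball 0 1" using e by simp
    then have "P e \<in> \<Omega>" using P_psi psi_in by simp
    then show False using e assms by simp
  qed
qed

lemma Om_sub: "\<Omega> \<subseteq> P ` cball 0 1"
proof
  fix w assume w: "w \<in> \<Omega>"
  then have "g w \<in> ball 0 1" by (rule g_in)
  moreover have "P (g w) = w" using P_psi \<open>g w \<in> ball 0 1\<close> psi_g w by simp
  ultimately show "w \<in> P ` cball 0 1" by (intro image_eqI[of _ _ "g w"]) auto
qed

lemma K_nonempty: assumes "x \<in> closure \<Omega>" shows "Kx x \<noteq> {}"
proof -
  have "compact (P ` cball 0 1)" using P_cont by (intro compact_continuous_image) auto
  then have "closed (P ` cball 0 1)" by (rule compact_imp_closed)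
  then have "closure \<Omega> \<subseteq> P ` cball 0 1" using Om_sub closure_minimal by blast
  then obtain e where "e \<in> cball 0 1" "P e = x" using assms by blast
  then show ?thesis by (auto simp: Kx_def)
qed

lemma K_compact: "compact (Kx x)"
proof -
  have "closed (Kx x)" unfolding Kx_def by (rule continuous_closed_preimage_constant[OF P_cont closed_cball])
  moreover have "Kx x \<subseteq> cball 0 1" by (auto simp: Kx_def)
  ultimately show ?thesis by (metis compact_cball compact_Int_closed inf.absorb_iff2)
qed

lemma cluster:
  assumes xO: "x \<notin> \<Omega>" and ep: "0 < \<epsilon>"
  shows "\<exists>r>0. \<forall>w\<in>\<Omega>. dist w x < r \<longrightarrow> (\<exists>e\<in>Kx x. dist (g w) e < \<epsilon>)"
proof -
  define S where "S = cball 0 1 \<inter> (\<Inter>e\<in>Kx x. - ball e \<epsilon>)"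
  have cS: "compact S" unfolding S_def
    by (intro compact_Int_closed compact_cball closed_INT) (auto simp: closed_Compl open_ball)
  have "compact (P ` S)"
    using P_cont by (intro compact_continuous_image[OF _ cS]) (auto simp: S_def intro: continuous_on_subset)
  then have cl: "closed (P ` S)" by (rule compact_imp_closed)
  have xS: "x \<notin> P ` S"
  proof
    assume "x \<in> P ` S"
    then obtain b where b: "b \<in> S" "P b = x" by blast
    then have "b \<in> Kx x" by (auto simp: S_def Kx_def)
    then have "b \<in> - ball b \<epsilon>" using b by (auto simp: S_def)
    then show False using ep by simp
  qed
  have "open (- (P ` S))" using cl by (simp add: open_Compl)
  then have "\<exists>r>0. ball x r \<subseteq> - (P ` S)" using xS unfolding open_contains_ball by blast
  then obtain r where r: "r > 0" "ball x r \<subseteq> - (P ` S)" by blast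
  have "\<exists>e\<in>Kx x. dist (g w) e < \<epsilon>" if w: "w \<in> \<Omega>" "dist w x < r" for w
  proof -
    have gw: "g w \<in> ball 0 1" using g_in w by simp
    have "P (g w) = w" using P_psi gw psi_g w by simp
    then have "P (g w) \<in> ball x r" using w by (simp add: dist_commute)
    then have "g w \<notin> S" using r by blast
    then show ?thesis using gw by (auto simp: S_def dist_commute)
  qed
  then show ?thesis using r by blast
qed

lemma radial:
  assumes xO: "x \<notin> \<Omega>" and e: "e \<in> Kx x" and ep: "0 < \<epsilon>"
  shows "\<exists>s0<1. \<forall>s. s0 \<le> s \<and> s < 1 \<longrightarrow> (0 \<le> s \<longrightarrow> \<psi> (of_real s * e) \<in> \<Omega> \<and> dist (\<psi> (of_real s * e)) x < \<epsilon>)"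
proof -
  have e1: "cmod e = 1" using K_sphere[OF xO e] .
  have ec: "e \<in> cball 0 1" and Pe: "P e = x" using e by (auto simp: Kx_def)
  obtain \<delta> where d: "\<delta> > 0" and dd: "\<forall>y\<in>cball 0 1. dist y e < \<delta> \<longrightarrow> dist (P y) (P e) < \<epsilon>"
    using P_cont ec ep unfolding continuous_on_iff by metis
  define s0 where "s0 = 1 - \<delta>/2"
  have "0 \<le> s \<longrightarrow> \<psi> (of_real s * e) \<in> \<Omega> \<and> dist (\<psi> (of_real s * e)) x < \<epsilon>" if s: "s0 \<le> s" "s < 1" for s
  proof
    assume s0: "0 \<le> s"
    have nb: "cmod (of_real s * e) = s" using e1 s0 by (simp add: norm_mult)
    then have inb: "of_real s * e \<in> ball 0 1" using s by simp
    have "dist (of_real s * e) e = 1 - s"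
    proof -
      have "of_real s * e - e = of_real (s - 1) * e" by (simp add: algebra_simps)
      then have "dist (of_real s * e) e = cmod (of_real (s - 1) * e)" by (simp add: dist_norm)
      also have "\<dots> = \<bar>s - 1\<bar>" using e1 by (simp only: norm_mult norm_of_real) simp
      finally show ?thesis using s by simp
    qed
    then have "dist (of_real s * e) e < \<delta>" using s d by (simp add: s0_def)
    then have "dist (P (of_real s * e)) x < \<epsilon>" using dd inb Pe by auto
    then show "\<psi> (of_real s * e) \<in> \<Omega> \<and> dist (\<psi> (of_real s * e)) x < \<epsilon>"
      using P_psi inb psi_in by simp
  qed
  moreover have "s0 < 1" using d by (simp add: s0_def)
  ultimately show ?thesis by blast
qed

end

context pset
begin

lemma part1:
  assumes xO: "x \<notin> \<Omega>" and e1: "e1 \<in> Kx x" and e2: "e2 \<in> Kx x" and ne: "e1 \<noteq> e2"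
  shows "\<exists>R0>0. \<forall>R. 0 < R \<and> R < R0 \<longrightarrow> horoball_s \<Omega> (\<psi> 0) x R = {}"
proof -
  define \<delta> where "\<delta> = dist e1 e2"
  have dpos: "0 < \<delta>" using ne by (simp add: \<delta>_def)
  have u1: "cmod e1 = 1" and u2: "cmod e2 = 1" using K_sphere xO e1 e2 by auto
  have d2: "\<delta> \<le> 2" using norm_triangle_ineq4[of e1 e2] u1 u2 by (simp add: \<delta>_def dist_norm)
  define C where "C = (1/2) * ln (\<delta>^2 / 64)"
  have main: "ereal C \<le> Limsup (at x within \<Omega>) (\<lambda>w. ereal (kobayashi \<Omega> z w - kobayashi \<Omega> (\<psi> 0) w))"
    if z: "z \<in> \<Omega>" for z
  proof -
    define a where "a = g z"
    have ca: "cmod a < 1" using g_in z by (simp add: a_def)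
    obtain e where e: "e \<in> Kx x" "\<delta>/2 \<le> dist a e"
    proof (cases "\<delta>/2 \<le> dist a e1")
      case True then show ?thesis using that e1 by blast
    next
      case False
      have "\<delta> \<le> dist e1 a + dist a e2" unfolding \<delta>_def by (rule dist_triangle)
      then have "\<delta>/2 \<le> dist a e2" using False by (simp add: dist_commute)
      then show ?thesis using that e2 by blast
    qed
    have eu: "cmod e = 1" using K_sphere[OF xO e(1)] .
    show ?thesis
    proof (rule Limsup_ge_freq)
      fix Pr assume ev: "eventually Pr (at x within \<Omega>)"
      obtain d where d: "d > 0" "\<forall>w\<in>\<Omega>. w \<noteq> x \<and> dist w x < d \<longrightarrow> Pr w"
        using ev unfolding eventually_at by blast
      obtain s0 where s0: "s0 < 1" and rad: "\<forall>s. s0 \<le> s \<and> s < 1 \<longrightarrow> (0 \<le> s \<longrightarrow> \<psi> (of_real s * e) \<in> \<Omega> \<and> dist (\<psi> (of_real s * e)) x < d)"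
        using radial[OF xO e(1) d(1)] by blast
      define s where "s = max s0 (1 - \<delta>/4)"
      have s: "s0 \<le> s" "s < 1" "0 \<le> s" "1 - \<delta>/4 \<le> s" using s0 dpos d2 by (auto simp: s_def)
      define b where "b = of_real s * e"
      define w where "w = \<psi> b"
      have wO: "w \<in> \<Omega>" and wd: "dist w x < d" using rad s by (auto simp: w_def b_def)
      have "w \<noteq> x" using wO xO by auto
      then have Pw: "Pr w" using d wO wd by blast
      have cb: "cmod b < 1" using s eu by (simp add: b_def norm_mult)
      have gw: "g w = b" using g_psi cb by (simp add: w_def)
      have "dist b e = 1 - s"
      proof -
        have "b - e = of_real (s - 1) * e" by (simp add: b_def algebra_simps)
        then have "dist b e = cmod (of_real (s - 1) * e)" by (simp add: dist_norm)
        also have "\<dots> = \<bar>s - 1\<bar>" using eu by (simp only: norm_mult norm_of_real) simp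
        finally show ?thesis using s by simp
      qed
      then have "dist b e \<le> \<delta>/4" using s by simp
      moreover have "dist a e \<le> dist a b + dist b e" by (rule dist_triangle)
      ultimately have "\<delta>/4 \<le> cmod (b - a)" using e(2) by (simp add: dist_norm norm_minus_commute)
      then have lo: "(1/2) * ln ((\<delta>/4)^2 / (4 * (1 - (cmod a)^2))) \<le> rho a b - rho 0 b"
        using F_lower[OF ca cb, of "\<delta>/4"] dpos by simp
      have A: "0 < 1 - (cmod a)^2" "1 - (cmod a)^2 \<le> 1" using ca by (auto simp: abs_square_less_1)
      have "\<delta>^2 / 64 \<le> (\<delta>/4)^2 / (4 * (1 - (cmod a)^2))"
      proof -
        have "(\<delta>/4)^2 / (4 * (1 - (cmod a)^2)) = (\<delta>^2 / 64) / (1 - (cmod a)^2)"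
          by (simp add: power_divide)
        also have "\<dots> \<ge> \<delta>^2 / 64" using A dpos by (simp add: le_divide_eq)
        finally show ?thesis .
      qed
      moreover have X0: "0 < \<delta>^2 / 64" using dpos by simp
      ultimately have "ln (\<delta>^2 / 64) \<le> ln ((\<delta>/4)^2 / (4 * (1 - (cmod a)^2)))"
        using ln_le_cancel_iff[of "\<delta>^2 / 64" "(\<delta>/4)^2 / (4 * (1 - (cmod a)^2))"] by (meson less_le_trans)
      then have "C \<le> (1/2) * ln ((\<delta>/4)^2 / (4 * (1 - (cmod a)^2)))"
        by (simp add: C_def)
      then have "C \<le> kobayashi \<Omega> z w - kobayashi \<Omega> (\<psi> 0) w"
        using lo ff_eq[OF z wO] gw by (simp add: a_def)
      then show "\<exists>y. Pr y \<and> ereal C \<le> ereal (kobayashi \<Omega> z y - kobayashi \<Omega> (\<psi> 0) y)"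
        using Pw by auto
    qed
  qed
  have "horoball_s \<Omega> (\<psi> 0) x R = {}" if R: "0 < R" "R < \<delta>^2/64" for R
  proof (rule ccontr)
    assume "horoball_s \<Omega> (\<psi> 0) x R \<noteq> {}"
    then obtain z where z: "z \<in> \<Omega>"
      and lt: "Limsup (at x within \<Omega>) (\<lambda>w. ereal (kobayashi \<Omega> z w - kobayashi \<Omega> (\<psi> 0) w)) < ereal (ln R / 2)"
      unfolding horoball_s_def by blast
    have "ereal C < ereal (ln R / 2)" using main[OF z] lt by (rule le_less_trans)
    then have "ln (\<delta>^2/64) < ln R" by (simp add: C_def)
    then have "\<delta>^2/64 < R" using R dpos by simp
    then show False using R by simp
  qed
  then show ?thesis using dpos by (intro exI[of _ "\<delta>^2/64"]) auto
qed

end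

context pset
begin

lemma in_closure:
  assumes xO: "x \<notin> \<Omega>" and xC: "x \<in> closure \<Omega>" and R: "0 < R"
  shows "x \<in> closure (horoball_b \<Omega> (\<psi> 0) x R)"
proof -
  obtain e where e: "e \<in> Kx x" using K_nonempty[OF xC] by blast
  have eu: "cmod e = 1" using K_sphere[OF xO e] .
  have ee: "cnj e * e = 1" using eu by (metis complex_norm_square mult.commute norm_one of_real_1 power_one)
  show ?thesis unfolding closure_approachable
  proof (intro allI impI)
    fix \<epsilon> :: real assume ep: "0 < \<epsilon>"
    obtain s0 where s0: "s0 < 1" and rad: "\<forall>s. s0 \<le> s \<and> s < 1 \<longrightarrow> (0 \<le> s \<longrightarrow> \<psi> (of_real s * e) \<in> \<Omega> \<and> dist (\<psi> (of_real s * e)) x < \<epsilon>)"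
      using radial[OF xO e ep] by blast
    define t where "t = max (max s0 0) (1 - R/16)"
    have t: "s0 \<le> t" "0 \<le> t" "t < 1" "1 - R/16 \<le> t" using s0 R by (auto simp: t_def)
    define a where "a = of_real t * e"
    define z where "z = \<psi> a"
    have zO: "z \<in> \<Omega>" and zd: "dist z x < \<epsilon>" using rad t by (auto simp: z_def a_def)
    have ca: "cmod a < 1" and na: "cmod a = t" using t eu by (auto simp: a_def norm_mult)
    have ga: "g z = a" using g_psi ca by (simp add: z_def)
    have t2: "0 < 1 - t^2" using t by (simp add: abs_square_less_1)
    have Rt: "4 * (1 - t^2) < R"
    proof -
      have "1 - t^2 = (1 - t) * (1 + t)" by (simp add: power2_eq_square algebra_simps)
      also have "\<dots> \<le> (1 - t) * 2" using t by (intro mult_left_mono) auto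
      finally show ?thesis using t R by (simp add: algebra_simps)
    qed
    have lim: "Liminf (at x within \<Omega>) (\<lambda>w. ereal (kobayashi \<Omega> z w - kobayashi \<Omega> (\<psi> 0) w))
          \<le> ereal ((1/2) * ln (4 * (1 - t^2)))"
    proof (rule Liminf_le_freq)
      fix Pr assume ev: "eventually Pr (at x within \<Omega>)"
      obtain d where d: "d > 0" "\<forall>w\<in>\<Omega>. w \<noteq> x \<and> dist w x < d \<longrightarrow> Pr w"
        using ev unfolding eventually_at by blast
      obtain s1 where s1: "s1 < 1" and rad1: "\<forall>s. s1 \<le> s \<and> s < 1 \<longrightarrow> (0 \<le> s \<longrightarrow> \<psi> (of_real s * e) \<in> \<Omega> \<and> dist (\<psi> (of_real s * e)) x < d)"
        using radial[OF xO e d(1)] by blast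
      define s where "s = max s1 t"
      have s: "s1 \<le> s" "s < 1" "0 \<le> s" "t \<le> s" using s1 t by (auto simp: s_def)
      define b where "b = of_real s * e"
      define w where "w = \<psi> b"
      have wO: "w \<in> \<Omega>" and wd: "dist w x < d" using rad1 s by (auto simp: w_def b_def)
      have "w \<noteq> x" using wO xO by auto
      then have Pw: "Pr w" using d wO wd by blast
      have cb: "cmod b < 1" using s eu by (simp add: b_def norm_mult)
      have gw: "g w = b" using g_psi cb by (simp add: w_def)
      have up: "rho a b - rho 0 b \<le> (1/2) * ln (4 * (cmod (1 - cnj a * b))^2 / (1 - (cmod a)^2))"
        by (rule F_upper[OF ca cb])
      have "cnj a * b = of_real (t * s)" unfolding a_def b_def using ee
        by (simp add: mult.assoc mult.left_commute)
      note cab = this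
      have ts: "0 < 1 - t * s" "1 - t * s \<le> 1 - t^2"
      proof -
        have "t * s \<le> 1 * s" using t s by (intro mult_right_mono) auto
        then show "0 < 1 - t * s" using s by simp
        have "t * t \<le> t * s" using t s by (intro mult_left_mono) auto
        then show "1 - t * s \<le> 1 - t^2" by (simp add: power2_eq_square)
      qed
      have ecab: "1 - cnj a * b = of_real (1 - t * s)" using cab by simp
      have "cmod (1 - cnj a * b) = 1 - t * s" unfolding ecab norm_of_real using ts by simp
      then have nn: "(cmod (1 - cnj a * b))^2 = (1 - t * s)^2" by simp
      have X0: "0 < 4 * (1 - t * s)^2 / (1 - t^2)" using ts t2 by simp
      have "4 * (1 - t * s)^2 / (1 - t^2) \<le> 4 * (1 - t^2)^2 / (1 - t^2)"
        using ts t2 by (intro divide_right_mono mult_left_mono power_mono) auto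
      also have "\<dots> = 4 * (1 - t^2)" using t2 by (simp add: power2_eq_square)
      finally have "ln (4 * (1 - t * s)^2 / (1 - t^2)) \<le> ln (4 * (1 - t^2))" using X0 by simp
      then have "rho a b - rho 0 b \<le> (1/2) * ln (4 * (1 - t^2))" using up nn na by simp
      then have "kobayashi \<Omega> z w - kobayashi \<Omega> (\<psi> 0) w \<le> (1/2) * ln (4 * (1 - t^2))"
        using ff_eq[OF zO wO] ga gw by simp
      then show "\<exists>y. Pr y \<and> ereal (kobayashi \<Omega> z y - kobayashi \<Omega> (\<psi> 0) y) \<le> ereal ((1/2) * ln (4 * (1 - t^2)))"
        using Pw by auto
    qed
    have "ln (4 * (1 - t^2)) < ln R" using Rt t2 by simp
    then have "ereal ((1/2) * ln (4 * (1 - t^2))) < ereal (ln R / 2)" by simp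
    with lim have "Liminf (at x within \<Omega>) (\<lambda>w. ereal (kobayashi \<Omega> z w - kobayashi \<Omega> (\<psi> 0) w)) < ereal (ln R / 2)"
      by (rule le_less_trans)
    then have "z \<in> horoball_b \<Omega> (\<psi> 0) x R" using zO unfolding horoball_b_def by auto
    then show "\<exists>y\<in>horoball_b \<Omega> (\<psi> 0) x R. dist y x < \<epsilon>" using zd by blast
  qed
qed

end

context pset
begin

lemma not_other:
  assumes xO: "x \<notin> \<Omega>" and yO: "y \<notin> \<Omega>" and R: "0 < R" and yx: "y \<noteq> x"
    and yC: "y \<in> closure (horoball_b \<Omega> (\<psi> 0) x R)"
  shows False
proof -
  have disj: "Kx x \<inter> Kx y = {}" using yx by (auto simp: Kx_def)
  obtain d where d: "d > 0" and dd: "\<forall>e\<in>Kx x. \<forall>e'\<in>Kx y. d \<le> dist e e'"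
    using separate_compact_closed[OF K_compact compact_imp_closed[OF K_compact] disj] by blast
  define \<gamma> where "\<gamma> = min (d/4) (d^2 / (32 * R))"
  have g: "0 < \<gamma>" "\<gamma> \<le> d/4" "\<gamma> \<le> d^2 / (32 * R)" using d R by (auto simp: \<gamma>_def)
  obtain r where r: "r > 0" and rr: "\<forall>w\<in>\<Omega>. dist w y < r \<longrightarrow> (\<exists>e\<in>Kx y. dist (g w) e < \<gamma>)"
    using cluster[OF yO g(1)] by blast
  obtain z where zH: "z \<in> horoball_b \<Omega> (\<psi> 0) x R" and zd: "dist z y < r"
    using yC r unfolding closure_approachable by blast
  have zO: "z \<in> \<Omega>" and lt: "Liminf (at x within \<Omega>) (\<lambda>w. ereal (kobayashi \<Omega> z w - kobayashi \<Omega> (\<psi> 0) w)) < ereal (ln R / 2)"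
    using zH unfolding horoball_b_def by auto
  obtain e' where e': "e' \<in> Kx y" "dist (g z) e' < \<gamma>" using rr zO zd by blast
  define a where "a = g z"
  have ca: "cmod a < 1" using g_in zO by (simp add: a_def)
  have eu: "cmod e' = 1" using K_sphere[OF yO e'(1)] .
  have "1 - \<gamma> < cmod a"
  proof -
    have "cmod e' \<le> cmod a + cmod (e' - a)" by (metis add.commute diff_add_cancel norm_triangle_ineq)
    moreover have "cmod (e' - a) < \<gamma>" using e'(2) by (simp add: a_def dist_norm norm_minus_commute)
    ultimately show ?thesis using eu by linarith
  qed
  define A where "A = 1 - (cmod a)^2"
  have A0: "0 < A" using ca by (simp add: A_def abs_square_less_1)
  have A1: "A < d^2 / (16 * R)"
  proof -
    have "A = (1 - cmod a) * (1 + cmod a)" by (simp add: A_def power2_eq_square algebra_simps)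
    also have "\<dots> \<le> (1 - cmod a) * 2" using ca by (intro mult_left_mono) auto
    also have "\<dots> < \<gamma> * 2" using \<open>1 - \<gamma> < cmod a\<close> by simp
    also have "\<dots> \<le> d^2 / (16 * R)" using g(3) by simp
    finally show ?thesis .
  qed
  have far: "3 * d / 4 \<le> dist a e" if "e \<in> Kx x" for e
  proof -
    have "d \<le> dist e e'" using dd that e'(1) by blast
    also have "\<dots> \<le> dist e a + dist a e'" by (rule dist_triangle)
    finally show ?thesis using e'(2) g(2) by (simp add: a_def dist_commute)
  qed
  define C where "C = (1/2) * ln ((d/2)^2 / (4 * A))"
  have ev: "eventually (\<lambda>w. ereal C \<le> ereal (kobayashi \<Omega> z w - kobayashi \<Omega> (\<psi> 0) w)) (at x within \<Omega>)"
  proof -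
    have d4: "0 < d/4" using d by simp
    obtain r' where r': "r' > 0" and rr': "\<forall>w\<in>\<Omega>. dist w x < r' \<longrightarrow> (\<exists>e\<in>Kx x. dist (g w) e < d/4)"
      using cluster[OF xO d4] by blast
    show ?thesis unfolding eventually_at
    proof (intro exI[of _ r'] conjI ballI impI)
      show "0 < r'" by (rule r')
      fix w assume wO: "w \<in> \<Omega>" and wx: "w \<noteq> x \<and> dist w x < r'"
      obtain e where e: "e \<in> Kx x" "dist (g w) e < d/4" using rr' wO wx by blast
      define b where "b = g w"
      have cb: "cmod b < 1" using g_in wO by (simp add: b_def)
      have "dist a e \<le> dist a b + dist b e" by (rule dist_triangle)
      then have "d/2 \<le> cmod (b - a)" using far[OF e(1)] e(2)
        by (simp add: b_def dist_norm norm_minus_commute)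
      then have "C \<le> rho a b - rho 0 b" using F_lower[OF ca cb, of "d/2"] d by (simp add: C_def A_def)
      then show "ereal C \<le> ereal (kobayashi \<Omega> z w - kobayashi \<Omega> (\<psi> 0) w)"
        using ff_eq[OF zO wO] by (simp add: a_def b_def)
    qed
  qed
  have "ereal C \<le> Liminf (at x within \<Omega>) (\<lambda>w. ereal (kobayashi \<Omega> z w - kobayashi \<Omega> (\<psi> 0) w))"
    by (rule Liminf_bounded[OF ev])
  then have "ereal C < ereal (ln R / 2)" using lt by (rule le_less_trans)
  then have "ln ((d/2)^2 / (4 * A)) < ln R" by (simp add: C_def)
  moreover have "0 < (d/2)^2 / (4 * A)" using d A0 by simp
  ultimately have "(d/2)^2 / (4 * A) < R" using R by simp
  then have "d^2 < 16 * R * A" using A0 by (simp add: power_divide field_simps)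
  moreover have "16 * R * A < d^2" using A1 R by (simp add: field_simps)
  ultimately show False by simp
qed

end

theorem mainTheorem13:
  fixes \<psi> :: "complex \<Rightarrow> complex" and \<Omega> :: "complex set"
  assumes \<Omega>_def: "\<Omega> = ball 0 1 - {complex_of_real t | t. 0 \<le> t \<and> t < 1}"
    and holo: "\<psi> holomorphic_on ball 0 1"
    and bij: "bij_betw \<psi> (ball 0 1) \<Omega>"
  shows "(\<forall>x::real. 0 < x \<and> x \<le> 1 \<longrightarrow>
           (\<exists>R0>0. \<forall>R. 0 < R \<and> R < R0 \<longrightarrow> horoball_s \<Omega> (\<psi> 0) (complex_of_real x) R = {}))
       \<and> (\<forall>x \<in> frontier \<Omega>. \<forall>R>0. closure (horoball_b \<Omega> (\<psi> 0) x R) \<inter> frontier \<Omega> = {x})"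
proof -
  have Om: "\<Omega> = Om" by (simp add: \<Omega>_def Om_def)
  have bij': "bij_betw \<psi> (ball 0 1) Om" using bij Om by simp
  obtain g P where rm: "rmap Om \<psi> g" and cP: "continuous_on (cball 0 1) P" and Pp: "\<forall>z\<in>ball 0 1. P z = \<psi> z"
    and two: "\<forall>x::real. 0 < x \<and> x \<le> 1 \<longrightarrow> (\<exists>e1 e2. e1 \<in> cball 0 1 \<and> e2 \<in> cball 0 1 \<and> e1 \<noteq> e2 \<and>
         P e1 = complex_of_real x \<and> P e2 = complex_of_real x)"
    using construct[OF holo bij'] by blast
  have opn: "open Om" using open_mapping_thm3[OF Hm_holo open_ball Hm_inj] Hm_image by simp
  interpret pset Om \<psi> g P using rm cP Pp opn by (simp add: pset_def pset_axioms_def)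
  have A: "\<exists>R0>0. \<forall>R. 0 < R \<and> R < R0 \<longrightarrow> horoball_s Om (\<psi> 0) (complex_of_real x) R = {}"
    if x: "0 < x" "x \<le> 1" for x :: real
  proof -
    have xO: "complex_of_real x \<notin> Om"
    proof (cases "x < 1")
      case True then show ?thesis using x by (auto simp: Om_def)
    next
      case False then have "x = 1" using x by simp
      then show ?thesis by (simp add: Om_def)
    qed
    obtain e1 e2 where e: "e1 \<in> cball 0 1" "e2 \<in> cball 0 1" "e1 \<noteq> e2"
      "P e1 = complex_of_real x" "P e2 = complex_of_real x" using two x by blast
    then have "e1 \<in> Kx (complex_of_real x)" "e2 \<in> Kx (complex_of_real x)" by (auto simp: Kx_def)
    then show ?thesis using part1[OF xO _ _ e(3)] by blast
  qed
  have B: "closure (horoball_b Om (\<psi> 0) x R) \<inter> frontier Om = {x}"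
    if xF: "x \<in> frontier Om" and R: "0 < R" for x R
  proof -
    have fr: "frontier Om = closure Om - Om" using opn by (simp add: frontier_def interior_open)
    have xO: "x \<notin> Om" and xC: "x \<in> closure Om" using xF fr by auto
    have "x \<in> closure (horoball_b Om (\<psi> 0) x R)" by (rule in_closure[OF xO xC R])
    moreover have "y = x" if "y \<in> closure (horoball_b Om (\<psi> 0) x R)" "y \<in> frontier Om" for y
    proof (rule ccontr)
      assume "y \<noteq> x"
      moreover have "y \<notin> Om" using that(2) fr by auto
      ultimately show False using not_other[OF xO _ R _ that(1)] by blast
    qed
    ultimately show ?thesis using xF by blast
  qed
  show ?thesis unfolding Om using A B by blast
qed

end
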